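(* For each type $X$ in the list below, the determinant of the quantum affine Cartan matrix of type $X$ is $$\det C_{\mathrm{aff}}(t)=\frac{(1-t^{2p})(1-t^{2q})(1-t^{2r})}{1-t^2},$$ where $(p,q,r)$ is given by: $\mathsf A_l$ ($l\ge0$): $(\tfrac12(l+1),\tfrac12(l+1),1)$; $\mathsf D_l$ ($l\ge4$): $(l-2,2,2)$; $\mathsf E_6$: $(3,3,2)$; $\mathsf E_7$: $(4,3,2)$; $\mathsf E_8$: $(5,3,2)$; $\mathsf C_l$ ($l\ge2$): $(l,1,1)$; $\mathsf B_l$ ($l\ge3$): $(l-1,2,1)$; $\mathsf F_4$: $(3,2,1)$; $\mathsf G_2$: $(2,1,1)$.
   Context: For a type $X$ of rank $l$, let $C_{\mathrm{aff}}$ be the $(l+1)\times(l+1)$ affine (untwisted, i.e. of type $X^{(1)}$) generalized Cartan matrix; for $\mathsf A_l$ with $l\ge2$ this is the Cartan matrix of a cycle with $l+1$ vertices, and for $\mathsf A_1$ it is $\begin{pmatrix}2&-2\\-2&2\end{pmatrix}$. The quantum affine Cartan matrix $C_{\mathrm{aff}}(t)$ is obtained from $C_{\mathrm{aff}}$ by replacing each diagonal entry $2$ by $1+t^2$ and multiplying each off-diagonal entry by $t$, i.e. $C_{\mathrm{aff}}(t)=(1-t)^2\mathbf 1+tC_{\mathrm{aff}}$; for type $\mathsf A_0$ one sets $C_{\mathrm{aff}}(t)=((1-t)^2)$. *)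

theory Defs
  imports "Jordan_Normal_Form.Determinant"
begin

datatype cartan_type = TA nat | TD nat | TE6 | TE7 | TE8 | TC nat | TB nat | TF4 | TG2

fun valid_type :: "cartan_type \<Rightarrow> bool" where
  "valid_type (TA l) = True"
| "valid_type (TD l) = (l \<ge> 4)"
| "valid_type (TC l) = (l \<ge> 2)"
| "valid_type (TB l) = (l \<ge> 3)"
| "valid_type _ = True"

fun rank_of :: "cartan_type \<Rightarrow> nat" where
  "rank_of (TA l) = l" | "rank_of (TD l) = l" | "rank_of TE6 = 6" | "rank_of TE7 = 7"
| "rank_of TE8 = 8" | "rank_of (TC l) = l" | "rank_of (TB l) = l" | "rank_of TF4 = 4"
| "rank_of TG2 = 2"

definition sl_entry :: "(nat \<times> nat) set \<Rightarrow> nat \<Rightarrow> nat \<Rightarrow> int" where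
  "sl_entry E i j = (if i = j then 2 else if (i, j) \<in> E \<or> (j, i) \<in> E then -1 else 0)"

text \<open>Entries a_ij of the untwisted affine generalized Cartan matrix X^(1), nodes 0..l,
  node 0 the affine node, Bourbaki numbering of the finite nodes.  For non-simply-laced
  bonds, a_ij = -2 (resp. -3) when node i is short and node j long.\<close>
fun aff_entry :: "cartan_type \<Rightarrow> nat \<Rightarrow> nat \<Rightarrow> int" where
  "aff_entry (TA l) i j =
     (if i = j then 2 else if l = 1 then -2
      else if j = (i + 1) mod (l + 1) \<or> i = (j + 1) mod (l + 1) then -1 else 0)"
| "aff_entry (TD l) i j =
     sl_entry ({(0, 2), (l - 2, l)} \<union> {(k, k + 1) | k. 1 \<le> k \<and> k \<le> l - 2}) i j"
| "aff_entry TE6 i j = sl_entry {(1,3),(3,4),(4,5),(5,6),(2,4),(0,2)} i j"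
| "aff_entry TE7 i j = sl_entry {(1,3),(3,4),(4,5),(5,6),(6,7),(2,4),(0,1)} i j"
| "aff_entry TE8 i j = sl_entry {(1,3),(3,4),(4,5),(5,6),(6,7),(7,8),(2,4),(0,8)} i j"
| "aff_entry (TC l) i j =
     (if (i, j) = (1, 0) \<or> (i, j) = (l - 1, l) then -2
      else sl_entry {(k, k + 1) | k. k < l} i j)"
| "aff_entry (TB l) i j =
     (if (i, j) = (l, l - 1) then -2
      else sl_entry ({(0, 2)} \<union> {(k, k + 1) | k. 1 \<le> k \<and> k < l}) i j)"
| "aff_entry TF4 i j = (if (i, j) = (3, 2) then -2 else sl_entry {(k, k + 1) | k. k < 4} i j)"
| "aff_entry TG2 i j = (if (i, j) = (2, 1) then -3 else sl_entry {(k, k + 1) | k. k < 2} i j)"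

definition cartan_aff :: "cartan_type \<Rightarrow> int mat" where
  "cartan_aff X = mat (Suc (rank_of X)) (Suc (rank_of X)) (\<lambda>(i, j). aff_entry X i j)"

definition qcartan_aff :: "cartan_type \<Rightarrow> real \<Rightarrow> real mat" where
  "qcartan_aff X t =
     (if X = TA 0 then mat 1 1 (\<lambda>_. (1 - t)\<^sup>2)
      else (1 - t)\<^sup>2 \<cdot>\<^sub>m 1\<^sub>m (Suc (rank_of X)) + t \<cdot>\<^sub>m map_mat of_int (cartan_aff X))"

text \<open>The triple (p,q,r) of the theorem (p may be a half-integer for type A).\<close>
fun pqr :: "cartan_type \<Rightarrow> rat \<times> rat \<times> rat" where
  "pqr (TA l) = (of_nat (l + 1) / 2, of_nat (l + 1) / 2, 1)"
| "pqr (TD l) = (of_nat l - 2, 2, 2)"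
| "pqr TE6 = (3, 3, 2)" | "pqr TE7 = (4, 3, 2)" | "pqr TE8 = (5, 3, 2)"
| "pqr (TC l) = (of_nat l, 1, 1)"
| "pqr (TB l) = (of_nat l - 1, 2, 1)"
| "pqr TF4 = (3, 2, 1)" | "pqr TG2 = (2, 1, 1)"

text \<open>t^(2a) for a with 2a a nonnegative integer.\<close>
definition pow2 :: "real \<Rightarrow> rat \<Rightarrow> real" where
  "pow2 t a = t ^ nat \<lfloor>2 * a\<rfloor>"

end

theory Submission
  imports Defs "HOL-Combinatorics.Permutations"
begin

definition subm :: "(nat \<Rightarrow> nat \<Rightarrow> 'a::comm_ring_1) \<Rightarrow> nat list \<Rightarrow> 'a mat" where
  "subm f xs = mat (length xs) (length xs) (\<lambda>(i,j). f (xs!i) (xs!j))"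

lemma subm_carrier: "subm f xs \<in> carrier_mat (length xs) (length xs)"
  unfolding subm_def by simp

lemma det_subm_Nil[simp]: "det (subm f []) = 1"
  by (rule det_dim_zero, simp add: subm_def)

lemma det_subm_single[simp]: "det (subm f [a]) = f a a"
  by (subst det_single[of "subm f [a]"], auto simp: subm_def)

lemma det_subm_perm:
  assumes "mset xs = mset ys"
  shows "det (subm f xs) = det (subm f ys)"
proof -
  obtain p where p: "p permutes {..<length ys}" "permute_list p ys = xs"
    using mset_eq_permutation[OF assms] by blast
  define n where "n = length ys"
  have len: "length xs = n" using assms n_def by (metis mset_eq_length)
  have p': "p permutes {0..<n}" using p(1) n_def by (simp add: lessThan_atLeast0)
  have xs: "\<And>i. i < n \<Longrightarrow> xs ! i = ys ! p i" using p permute_list_nth n_def by metis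
  let ?B = "subm f ys"
  have B: "?B \<in> carrier_mat n n" using subm_carrier n_def by metis
  let ?C = "mat n n (\<lambda>(i,j). ?B $$ (p i, j))"
  have C: "?C \<in> carrier_mat n n" by simp
  have pin: "\<And>i. i < n \<Longrightarrow> p i < n" using p' by (meson atLeastLessThan_iff le0 permutes_in_image)
  have "det ?C = signof p * det ?B" by (rule det_permute_rows[OF B p'])
  have CT: "?C\<^sup>T \<in> carrier_mat n n" using C by simp
  have "det (mat n n (\<lambda>(i,j). ?C\<^sup>T $$ (p i, j))) = signof p * det (?C\<^sup>T)"
    by (rule det_permute_rows[OF CT p'])
  moreover have "mat n n (\<lambda>(i,j). ?C\<^sup>T $$ (p i, j)) = (subm f xs)\<^sup>T"
  proof (rule eq_matI)
    fix i j assume ij: "i < dim_row ((subm f xs)\<^sup>T)" "j < dim_col ((subm f xs)\<^sup>T)"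
    hence i: "i < n" and j: "j < n" by (auto simp: subm_def len)
    show "mat n n (\<lambda>(i,j). ?C\<^sup>T $$ (p i, j)) $$ (i, j) = (subm f xs)\<^sup>T $$ (i, j)"
      using i j pin[OF i] pin[OF j] by (simp add: subm_def len xs n_def)
  qed (auto simp: subm_def len)
  moreover have "det (?C\<^sup>T) = det ?C" using det_transpose[OF C] .
  moreover have "det ((subm f xs)\<^sup>T) = det (subm f xs)"
    using det_transpose[OF subm_carrier[of f xs]] .
  ultimately have "det (subm f xs) = signof p * (signof p * det ?B)"
    using \<open>det ?C = signof p * det ?B\<close> by simp
  also have "\<dots> = det ?B"
    by (simp flip: mult.assoc of_int_mult)
  finally show ?thesis .
qed

lemma det_subm_leaf:
  assumes z: "\<forall>x\<in>set zs. f a x = 0 \<and> f x a = 0"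
  shows "det (subm f (zs@[b,a])) = f a a * det (subm f (zs@[b])) - f a b * f b a * det (subm f zs)"
proof -
  define n where "n = length zs"
  let ?M = "subm f (zs@[b,a])"
  have M: "?M \<in> carrier_mat (Suc (Suc n)) (Suc (Suc n))" unfolding subm_def n_def by simp
  have "det ?M = (\<Sum>j<Suc (Suc n). ?M $$ (Suc n, j) * cofactor ?M (Suc n) j)"
    by (rule laplace_expansion_row[OF M], simp)
  also have "\<dots> = ?M $$ (Suc n, n) * cofactor ?M (Suc n) n + ?M $$ (Suc n, Suc n) * cofactor ?M (Suc n) (Suc n)"
  proof -
    have "(\<Sum>j<n. ?M $$ (Suc n, j) * cofactor ?M (Suc n) j) = 0"
    proof (rule sum.neutral, intro ballI)
      fix j assume "j \<in> {..<n}"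
      hence j: "j < n" by simp
      have "?M $$ (Suc n, j) = f a (zs ! j)" using j by (simp add: subm_def n_def nth_append)
      also have "\<dots> = 0" using z j n_def by auto
      finally show "?M $$ (Suc n, j) * cofactor ?M (Suc n) j = 0" by simp
    qed
    thus ?thesis by simp
  qed
  also have "?M $$ (Suc n, n) = f a b" by (simp add: subm_def n_def nth_append)
  also have "?M $$ (Suc n, Suc n) = f a a" by (simp add: subm_def n_def nth_append)
  also have "cofactor ?M (Suc n) (Suc n) = det (subm f (zs@[b]))"
  proof -
    have "mat_delete ?M (Suc n) (Suc n) = subm f (zs@[b])"
      by (rule eq_matI, auto simp: subm_def mat_delete_def n_def nth_append)
    thus ?thesis unfolding cofactor_def by simp
  qed
  also have "cofactor ?M (Suc n) n = - (f b a * det (subm f zs))"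
  proof -
    let ?A = "mat_delete ?M (Suc n) n"
    have A: "?A \<in> carrier_mat (Suc n) (Suc n)" using mat_delete_carrier[OF M] by simp
    have "det ?A = (\<Sum>i<Suc n. ?A $$ (i, n) * cofactor ?A i n)"
      by (rule laplace_expansion_column[OF A], simp)
    also have "\<dots> = ?A $$ (n, n) * cofactor ?A n n"
    proof -
      have "(\<Sum>i<n. ?A $$ (i, n) * cofactor ?A i n) = 0"
      proof (rule sum.neutral, intro ballI)
        fix i assume "i \<in> {..<n}"
        hence i: "i < n" by simp
        have "?A $$ (i, n) = f (zs ! i) a" using i by (simp add: subm_def mat_delete_def n_def nth_append)
        also have "\<dots> = 0" using z i n_def by auto
        finally show "?A $$ (i, n) * cofactor ?A i n = 0" by simp
      qed
      thus ?thesis by simp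
    qed
    also have "?A $$ (n, n) = f b a" by (simp add: subm_def mat_delete_def n_def nth_append)
    also have "cofactor ?A n n = det (subm f zs)"
    proof -
      have "mat_delete ?A n n = subm f zs"
        by (rule eq_matI, auto simp: subm_def mat_delete_def n_def nth_append)
      thus ?thesis unfolding cofactor_def by simp
    qed
    finally have "det ?A = f b a * det (subm f zs)" .
    thus ?thesis unfolding cofactor_def by simp
  qed
  finally show ?thesis by (simp add: algebra_simps)
qed

lemma det_subm_iso:
  assumes z: "\<forall>x\<in>set zs. f a x = 0 \<and> f x a = 0"
  shows "det (subm f (zs@[a])) = f a a * det (subm f zs)"
proof (cases zs rule: rev_cases)
  case Nil
  then show ?thesis by simp
next
  case (snoc ws b)
  have "det (subm f (ws@[b,a])) = f a a * det (subm f (ws@[b])) - f a b * f b a * det (subm f ws)"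
    by (rule det_subm_leaf, use z snoc in auto)
  moreover have "f a b = 0" using z snoc by auto
  ultimately show ?thesis using snoc by simp
qed

definition Q :: "cartan_type \<Rightarrow> real \<Rightarrow> nat \<Rightarrow> nat \<Rightarrow> real" where
  "Q X t i j = (1 - t)\<^sup>2 * (if i = j then 1 else 0) + t * of_int (aff_entry X i j)"

lemma qcartan_subm:
  assumes "X \<noteq> TA 0"
  shows "qcartan_aff X t = subm (Q X t) [0..<Suc (rank_of X)]"
  unfolding qcartan_aff_def subm_def Q_def cartan_aff_def using assms
  by (intro eq_matI) (auto simp del: upt_Suc)

lemma upt_step:
  assumes "\<forall>x<k. f (Suc k) x = 0 \<and> f x (Suc k) = 0"
  shows "det (subm f [0..<Suc (Suc k)]) = f (Suc k) (Suc k) * det (subm f [0..<Suc k])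
     - f (Suc k) k * f k (Suc k) * det (subm f [0..<k])"
proof -
  have e: "[0..<Suc (Suc k)] = [0..<k] @ [k, Suc k]" by simp
  show ?thesis unfolding e by (subst det_subm_leaf, use assms in auto)
qed

lemma aff_TC: "2 \<le> l \<Longrightarrow> i \<le> l \<Longrightarrow> j \<le> l \<Longrightarrow> aff_entry (TC l) i j =
  (if i = j then 2 else if (i,j) = (1,0) \<or> (i,j) = (l-1,l) then -2
   else if j = Suc i \<or> i = Suc j then -1 else 0)"
  by (auto simp: sl_entry_def)

lemma QC_diag: "2 \<le> l \<Longrightarrow> i \<le> l \<Longrightarrow> Q (TC l) t i i = 1 + t^2"
  by (simp add: Q_def aff_TC del: aff_entry.simps) (simp add: power2_eq_square algebra_simps)
lemma QC_zero: assumes "2 \<le> l" "i \<le> l" "j \<le> l" "i \<noteq> j" "j \<noteq> Suc i" "i \<noteq> Suc j"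
  shows "Q (TC l) t i j = 0"
proof -
  have "\<not> ((i,j) = (1,0) \<or> (i,j) = (l-1,l))" using assms by auto
  thus ?thesis using assms by (auto simp: Q_def aff_TC simp del: aff_entry.simps)
qed
lemma QC_prod: "2 \<le> l \<Longrightarrow> Suc k \<le> l \<Longrightarrow>
   Q (TC l) t (Suc k) k * Q (TC l) t k (Suc k) = (if k = 0 \<or> Suc k = l then 2 else 1) * t^2"
  by (simp add: Q_def aff_TC del: aff_entry.simps) (auto simp: power2_eq_square)

lemma QC_step:
  assumes "2 \<le> l" "Suc k \<le> l"
  shows "det (subm (Q (TC l) t) [0..<Suc (Suc k)]) = (1 + t^2) * det (subm (Q (TC l) t) [0..<Suc k])
     - (if k = 0 \<or> Suc k = l then 2 else 1) * t^2 * det (subm (Q (TC l) t) [0..<k])"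
proof -
  have "\<forall>x<k. Q (TC l) t (Suc k) x = 0 \<and> Q (TC l) t x (Suc k) = 0"
    using assms by (auto intro!: QC_zero)
  from upt_step[OF this] show ?thesis using assms
    by (simp add: QC_diag QC_prod del: upt_Suc)
qed

lemma TC_pref:
  assumes l: "2 \<le> l"
  shows "Suc (Suc k) \<le> l \<Longrightarrow> det (subm (Q (TC l) t) [0..<Suc k]) = 1 + (t^2)^(Suc k)
     \<and> det (subm (Q (TC l) t) [0..<Suc (Suc k)]) = 1 + (t^2)^(Suc (Suc k))"
proof (induction k)
  case 0
  have s1: "det (subm (Q (TC l) t) [0..<Suc 0]) = 1+t^2"
    using QC_diag[OF l, of 0 t] by simp
  have "det (subm (Q (TC l) t) [0..<Suc (Suc 0)]) = (1+t^2)*(1+t^2) - (2*t^2) * 1"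
    using QC_step[of l 0 t] l s1 by (simp del: upt_Suc)
  also have "\<dots> = 1 + (t^2)^(Suc (Suc 0))" by (simp add: algebra_simps power_add eval_nat_numeral)
  finally show ?case using s1 by simp
next
  case (Suc k)
  have IH: "det (subm (Q (TC l) t) [0..<Suc k]) = 1 + (t^2)^(Suc k)"
     "det (subm (Q (TC l) t) [0..<Suc (Suc k)]) = 1 + (t^2)^(Suc (Suc k))" using Suc by auto
  have "det (subm (Q (TC l) t) [0..<Suc (Suc (Suc k))]) =
    (1+t^2) * det (subm (Q (TC l) t) [0..<Suc (Suc k)]) - t^2 * det (subm (Q (TC l) t) [0..<Suc k])"
    using QC_step[of l "Suc k" t] l Suc.prems by (simp del: upt_Suc)
  also have "\<dots> = (1+t^2) * (1 + (t^2)^(Suc (Suc k))) - t^2 * (1 + (t^2)^(Suc k))" unfolding IH ..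
  also have "\<dots> = 1 + (t^2)^(Suc (Suc (Suc k)))" by (simp add: algebra_simps power_add eval_nat_numeral)
  finally show ?case using IH by simp
qed

lemma TC_det:
  assumes l: "2 \<le> l"
  shows "det (subm (Q (TC l) t) [0..<Suc l]) = (1 - t^2) * (1 - (t^2)^l)"
proof -
  obtain m where m: "l = Suc (Suc m)" using l by (metis add_2_eq_Suc le_Suc_ex)
  have h: "det (subm (Q (TC l) t) [0..<Suc m]) = 1 + (t^2)^(Suc m)" "det (subm (Q (TC l) t) [0..<Suc (Suc m)]) = 1 + (t^2)^(Suc (Suc m))"
    using TC_pref[OF l, of m t] m by auto
  have "det (subm (Q (TC l) t) [0..<Suc (Suc (Suc m))]) = 
    (1+t^2) * det (subm (Q (TC l) t) [0..<Suc (Suc m)]) - 2 * t^2 * det (subm (Q (TC l) t) [0..<Suc m])"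
    using QC_step[of l "Suc m" t] l m by (simp del: upt_Suc)
  also have "\<dots> = (1 + t^2) * (1 + (t^2)^(Suc (Suc m))) - 2 * t^2 * (1 + (t^2)^(Suc m))" unfolding h ..
  also have "\<dots> = (1 - t^2) * (1 - (t^2)^(Suc (Suc m)))" by (simp add: algebra_simps power_add eval_nat_numeral)
  finally show ?thesis using m by simp
qed

lemma BD_pref:
  fixes f :: "nat \<Rightarrow> nat \<Rightarrow> real"
  assumes diag: "\<And>i. i \<le> L \<Longrightarrow> f i i = 1 + t^2"
    and h01: "f 1 0 = 0" "f 0 1 = 0"
    and p02: "f 0 2 * f 2 0 = t^2" and p12: "f 2 1 * f 1 2 = t^2"
    and chain: "\<And>k x. 2 \<le> k \<Longrightarrow> Suc k \<le> L \<Longrightarrow> x < k \<Longrightarrow> f (Suc k) x = 0 \<and> f x (Suc k) = 0"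
    and pk: "\<And>k. 2 \<le> k \<Longrightarrow> Suc k \<le> L \<Longrightarrow> f (Suc k) k * f k (Suc k) = t^2"
    and L: "2 \<le> L"
  shows "Suc (Suc k) \<le> L \<Longrightarrow> det (subm f [0..<Suc (Suc k)]) = (1+t^2) * (1 + (t^2)^(Suc k))
     \<and> det (subm f [0..<Suc (Suc (Suc k))]) = (1+t^2) * (1 + (t^2)^(Suc (Suc k)))"
proof (induction k)
  case 0
  have d1: "det (subm f [0..<Suc 0]) = 1 + t^2" using diag[of 0] by simp
  have d2: "det (subm f [0..<Suc (Suc 0)]) = (1+t^2) * (1+t^2)"
    using upt_step[of 0 f] diag[of 0] diag[of 1] h01 L d1 by (simp del: upt_Suc)
  have "det (subm f [0..<3]) = det (subm f ([1]@[2,0]))"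
    by (rule det_subm_perm) (simp add: numeral_3_eq_3)
  also have "\<dots> = f 0 0 * det (subm f ([1]@[2])) - f 0 2 * f 2 0 * det (subm f [1])"
    by (rule det_subm_leaf) (use h01 in simp)
  also have "det (subm f ([1]@[2])) = det (subm f ([]@[1,2]))" by simp
  also have "\<dots> = f 2 2 * det (subm f ([]@[1])) - f 2 1 * f 1 2 * det (subm f [])"
    by (rule det_subm_leaf) simp
  finally have "det (subm f [0..<3]) = (1+t^2)*((1+t^2)*(1+t^2) - t^2) - t^2*(1+t^2)"
    using diag[of 0] diag[of 1] diag[of 2] L p02 p12 by simp
  also have "\<dots> = (1+t^2) * (1 + (t^2)^(Suc (Suc 0)))" by (simp add: algebra_simps power_add eval_nat_numeral)
  finally show ?case using d2 by (simp add: numeral_3_eq_3)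
next
  case (Suc k)
  have IH: "det (subm f [0..<Suc (Suc k)]) = (1+t^2) * (1 + (t^2)^(Suc k))"
     "det (subm f [0..<Suc (Suc (Suc k))]) = (1+t^2) * (1 + (t^2)^(Suc (Suc k)))" using Suc by auto
  have "det (subm f [0..<Suc (Suc (Suc (Suc k)))]) =
    (1+t^2) * det (subm f [0..<Suc (Suc (Suc k))]) - t^2 * det (subm f [0..<Suc (Suc k)])"
    using upt_step[of "Suc (Suc k)" f] chain[of "Suc (Suc k)"] pk[of "Suc (Suc k)"] diag[of "Suc (Suc (Suc k))"] Suc.prems
    by (simp del: upt_Suc)
  also have "\<dots> = (1+t^2) * ((1+t^2) * (1 + (t^2)^(Suc (Suc k)))) - t^2 * ((1+t^2) * (1 + (t^2)^(Suc k)))" unfolding IH ..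
  also have "\<dots> = (1+t^2) * (1 + (t^2)^(Suc (Suc (Suc k))))" by (simp add: algebra_simps power_add eval_nat_numeral)
  finally show ?case using IH by simp
qed

lemma QB: assumes "3 \<le> l" "i \<le> l" "j \<le> l"
  shows "Q (TB l) t i j = (if i = j then 1 + t^2 else if (i,j) = (l, l-1) then -2*t
   else if (i = 0 \<and> j = 2) \<or> (i = 2 \<and> j = 0) \<or> (j = Suc i \<and> 1 \<le> i) \<or> (i = Suc j \<and> 1 \<le> j) then -t else 0)"
  using assms by (auto simp: Q_def sl_entry_def power2_eq_square algebra_simps)

lemma TB_det:
  assumes l: "3 \<le> l"
  shows "det (subm (Q (TB l) t) [0..<Suc l]) = (1 - (t^2)^(l-1)) * (1 - (t^2)^2)"
proof -
  define m where "m = l - 3"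
  have m: "l = Suc (Suc (Suc m))" using l unfolding m_def by simp
  let ?f = "Q (TB l) t"
  have h: "det (subm ?f [0..<Suc (Suc m)]) = (1+t^2) * (1 + (t^2)^(Suc m))
     \<and> det (subm ?f [0..<Suc (Suc (Suc m))]) = (1+t^2) * (1 + (t^2)^(Suc (Suc m)))"
  proof (rule BD_pref[where L = "Suc (Suc m)"])
    show "\<And>i. i \<le> Suc (Suc m) \<Longrightarrow> ?f i i = 1 + t^2" using l m by (simp add: QB)
    show "?f 1 0 = 0" "?f 0 1 = 0" using l m by (simp_all add: QB)
    show "?f 0 2 * ?f 2 0 = t^2" "?f 2 1 * ?f 1 2 = t^2" using l m by (simp_all add: QB power2_eq_square)
    show "\<And>k x. 2 \<le> k \<Longrightarrow> Suc k \<le> Suc (Suc m) \<Longrightarrow> x < k \<Longrightarrow> ?f (Suc k) x = 0 \<and> ?f x (Suc k) = 0"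
      using l m by (simp add: QB)
    show "\<And>k. 2 \<le> k \<Longrightarrow> Suc k \<le> Suc (Suc m) \<Longrightarrow> ?f (Suc k) k * ?f k (Suc k) = t^2"
      using l m by (simp add: QB power2_eq_square)
  qed (auto)
  have "det (subm ?f [0..<Suc (Suc (Suc (Suc m)))]) =
    ?f l l * det (subm ?f [0..<Suc (Suc (Suc m))]) - ?f l (Suc (Suc m)) * ?f (Suc (Suc m)) l * det (subm ?f [0..<Suc (Suc m)])"
    using upt_step[of "Suc (Suc m)" ?f] m l by (simp add: QB del: upt_Suc)
  also have "\<dots> = (1+t^2) * ((1+t^2) * (1 + (t^2)^(Suc (Suc m)))) - 2 * t^2 * ((1+t^2) * (1 + (t^2)^(Suc m)))"
    using h m l by (simp add: QB power2_eq_square del: upt_Suc)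
  also have "\<dots> = (1 - (t^2)^(Suc (Suc m))) * (1 - (t^2)^2)" by (simp add: algebra_simps power_add eval_nat_numeral)
  finally show ?thesis using m by simp
qed

lemma QD: assumes "4 \<le> l" "i \<le> l" "j \<le> l"
  shows "Q (TD l) t i j = (if i = j then 1 + t^2
   else if (i = 0 \<and> j = 2) \<or> (i = 2 \<and> j = 0) \<or> (i = l-2 \<and> j = l) \<or> (i = l \<and> j = l-2)
     \<or> (j = Suc i \<and> 1 \<le> i \<and> i \<le> l-2) \<or> (i = Suc j \<and> 1 \<le> j \<and> j \<le> l-2) then -t else 0)"
  using assms by (auto simp: Q_def sl_entry_def power2_eq_square algebra_simps)

lemma TD_det:
  assumes l: "4 \<le> l"
  shows "det (subm (Q (TD l) t) [0..<Suc l]) = (1 - (t^2)^(l-2)) * (1 - (t^2)^2) * (1 + t^2)"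
proof -
  define m where "m = l - 4"
  have m: "l = Suc (Suc (Suc (Suc m)))" using l unfolding m_def by simp
  let ?f = "Q (TD l) t"
  have h: "\<And>k. Suc (Suc k) \<le> Suc (Suc (Suc m)) \<Longrightarrow> det (subm ?f [0..<Suc (Suc k)]) = (1+t^2) * (1 + (t^2)^(Suc k))
     \<and> det (subm ?f [0..<Suc (Suc (Suc k))]) = (1+t^2) * (1 + (t^2)^(Suc (Suc k)))"
  proof (rule BD_pref[where L = "Suc (Suc (Suc m))"])
    show "\<And>i. i \<le> Suc (Suc (Suc m)) \<Longrightarrow> ?f i i = 1 + t^2" using l m by (simp add: QD)
    show "?f 1 0 = 0" "?f 0 1 = 0" using l m by (simp_all add: QD)
    show "?f 0 2 * ?f 2 0 = t^2" "?f 2 1 * ?f 1 2 = t^2" using l m by (simp_all add: QD power2_eq_square)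
    show "\<And>k x. 2 \<le> k \<Longrightarrow> Suc k \<le> Suc (Suc (Suc m)) \<Longrightarrow> x < k \<Longrightarrow> ?f (Suc k) x = 0 \<and> ?f x (Suc k) = 0"
      using l m by (simp add: QD)
    show "\<And>k. 2 \<le> k \<Longrightarrow> Suc k \<le> Suc (Suc (Suc m)) \<Longrightarrow> ?f (Suc k) k * ?f k (Suc k) = t^2"
      using l m by (simp add: QD power2_eq_square)
  qed (auto)
  have h1: "det (subm ?f [0..<Suc (Suc m)]) = (1+t^2) * (1 + (t^2)^(Suc m))" using h[of m] by simp
  have h2: "det (subm ?f [0..<Suc (Suc (Suc (Suc m)))]) = (1+t^2) * (1 + (t^2)^(Suc (Suc (Suc m))))"
    using h[of "Suc m"] by simp
  define zs where "zs = [0..<Suc (Suc m)] @ [Suc (Suc (Suc m))]"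
  have "det (subm ?f [0..<Suc l]) = det (subm ?f (zs @ [Suc (Suc m), l]))"
    by (rule det_subm_perm) (simp add: m zs_def)
  also have "\<dots> = ?f l l * det (subm ?f (zs @ [Suc (Suc m)])) - ?f l (Suc (Suc m)) * ?f (Suc (Suc m)) l * det (subm ?f zs)"
    by (rule det_subm_leaf) (use l m in \<open>auto simp: zs_def QD\<close>)
  also have "det (subm ?f (zs @ [Suc (Suc m)])) = det (subm ?f [0..<Suc (Suc (Suc (Suc m)))])"
    by (rule det_subm_perm) (simp add: zs_def)
  also have "det (subm ?f zs) = ?f (Suc (Suc (Suc m))) (Suc (Suc (Suc m))) * det (subm ?f [0..<Suc (Suc m)])"
    unfolding zs_def by (rule det_subm_iso) (use l m in \<open>auto simp: QD\<close>)
  also note h1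
  also note h2
  also have "?f l l * ((1+t^2) * (1 + (t^2)^(Suc (Suc (Suc m))))) - ?f l (Suc (Suc m)) * ?f (Suc (Suc m)) l *
     (?f (Suc (Suc (Suc m))) (Suc (Suc (Suc m))) * ((1+t^2) * (1 + (t^2)^(Suc m))))
     = (1+t^2) * ((1+t^2) * (1 + (t^2)^(Suc (Suc (Suc m))))) - t^2 * ((1+t^2) * ((1+t^2) * (1 + (t^2)^(Suc m))))"
    using l m by (simp add: QD power2_eq_square)
  also have "\<dots> = (1 - (t^2)^(Suc (Suc m))) * (1 - (t^2)^2) * (1 + t^2)"
    by (simp add: algebra_simps power_add eval_nat_numeral)
  finally show ?thesis using m h1 h2 by simp
qed

lemma sum_ind4:
  fixes t :: real and n :: nat
  assumes "a < n" "b < n" "c < n" "d < n"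
  shows "(\<Sum>k<n. ((if k=a then 1 else 0) - t*(if k=b then 1 else 0)) * ((if k=c then 1 else 0) - t*(if k = d then 1 else 0)))
    = (if a=c then 1 else 0) - t*(if a = d then 1 else 0) - t*(if b = c then 1 else 0) + t^2*(if b=d then 1 else 0)"
proof -
  have e: "\<And>k. ((if k=a then 1 else 0) - t*(if k=b then 1 else 0)) * ((if k=c then 1 else 0) - t*(if k = d then 1 else (0::real)))
    = (if k = a then (if a = c then 1 else 0) else 0) - t * (if k = a then (if a = d then 1 else 0) else 0)
      - t * (if k = b then (if b = c then 1 else 0) else 0) + t^2 * (if k = b then (if b = d then 1 else 0) else 0)"
    by (auto simp: power2_eq_square algebra_simps)
  show ?thesis unfolding e using assms
    by (simp add: sum.distrib sum_subtractf sum_distrib_left[symmetric])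
qed

definition cycB :: "nat \<Rightarrow> real \<Rightarrow> real mat" where
  "cycB n t = mat n n (\<lambda>(i,j). (if j = i then 1 else 0) - t * (if j = Suc i mod n then 1 else 0))"

lemma cyc_fact:
  assumes l: "1 \<le> l"
  shows "subm (Q (TA l) t) [0..<Suc l] = cycB (Suc l) t * (cycB (Suc l) t)\<^sup>T"
proof (rule eq_matI)
  fix i j assume "i < dim_row (cycB (Suc l) t * (cycB (Suc l) t)\<^sup>T)" "j < dim_col (cycB (Suc l) t * (cycB (Suc l) t)\<^sup>T)"
  hence i: "i < Suc l" and j: "j < Suc l" by (auto simp: cycB_def)
  have "(cycB (Suc l) t * (cycB (Suc l) t)\<^sup>T) $$ (i,j) =
    (\<Sum>k<Suc l. ((if k=i then 1 else 0) - t*(if k=Suc i mod Suc l then 1 else 0)) * ((if k=j then 1 else 0) - t*(if k = Suc j mod Suc l then 1 else 0)))"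
    using i j by (simp add: cycB_def scalar_prod_def lessThan_atLeast0 cong: if_cong)
  also have "\<dots> = (if i=j then 1 else 0) - t*(if i = Suc j mod Suc l then 1 else 0) - t*(if Suc i mod Suc l = j then 1 else 0) + t^2*(if Suc i mod Suc l = Suc j mod Suc l then 1 else 0)"
    by (rule sum_ind4) (use i j in auto)
  also have "\<dots> = subm (Q (TA l) t) [0..<Suc l] $$ (i,j)"
  proof -
    have inj: "(Suc i mod Suc l = Suc j mod Suc l) = (i = j)" using i j
      by (cases "Suc i = Suc l"; cases "Suc j = Suc l") auto
    have ne: "Suc i mod Suc l \<noteq> i" using i l by (cases "Suc i = Suc l") auto
    have two: "\<not> (j = Suc i mod Suc l \<and> i = Suc j mod Suc l)" if "2 \<le> l"
    proof
      assume h: "j = Suc i mod Suc l \<and> i = Suc j mod Suc l"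
      have h1: "j = Suc i mod Suc l" using h by (rule conjunct1)
      have h2: "i = Suc j mod Suc l" using h by (rule conjunct2)
      show False
      proof (cases "Suc i = Suc l")
        case True
        then have j0: "j = 0" using h1 by simp
        have "Suc 0 < Suc l" using that by simp
        then have "Suc 0 mod Suc l = Suc 0" by (rule mod_less)
        then have "i = 1" using h2 j0 by (simp only:)
        then show False using True that by simp
      next
        case False
        then have "Suc i < Suc l" using i by simp
        then have "Suc i mod Suc l = Suc i" by (rule mod_less)
        then have js: "j = Suc i" using h1 by simp
        show False
        proof (cases "Suc j = Suc l")
          case True
          then have "Suc j mod Suc l = 0" by simp
          then have "i = 0" by (rule trans[OF h2])
          then show False using True js that by linarith
        next
          case False
          then have "Suc j < Suc l" using j by simp
          then have "Suc j mod Suc l = Suc j" by (rule mod_less)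
          then have "i = Suc j" by (rule trans[OF h2])
          then show False using js by linarith
        qed
      qed
    qed
    have one: "j = Suc i mod Suc l \<and> i = Suc j mod Suc l" if "l = 1" "i \<noteq> j"
    proof -
      have "i < 2" "j < 2" using i j that by auto
      then show ?thesis using that by (auto simp: less_2_cases_iff)
    qed
    have ent: "subm (Q (TA l) t) [0..<Suc l] $$ (i,j) = Q (TA l) t i j"
      using i j by (simp add: subm_def del: upt_Suc)
    have main: "(if i=j then 1 else 0) - t*(if i = Suc j mod Suc l then 1 else 0) - t*(if Suc i mod Suc l = j then 1 else 0) + t^2*(if Suc i mod Suc l = Suc j mod Suc l then 1 else 0) = Q (TA l) t i j"
    proof (cases "i = j")
      case True
      then show "?thesis" using ne inj by (simp add: Q_def power2_eq_square algebra_simps)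
    next
      case ij: False
      show ?thesis
      proof (cases "l = 1")
        case True
        have "i < 2" "j < 2" using i j True by auto
        then have "(i = 0 \<and> j = 1) \<or> (i = 1 \<and> j = 0)" using ij by (auto simp: less_2_cases_iff)
        then show ?thesis using True by (auto simp: Q_def)
      next
        case False
        then have "2 \<le> l" using l by simp
        then have nb: "\<not> (j = Suc i mod Suc l \<and> i = Suc j mod Suc l)" using two by blast
        have l1: "l \<noteq> 1" using False .
        have c0: "(i = j) = False" using ij by simp
        have c3: "(Suc i mod Suc l = Suc j mod Suc l) = False" using inj ij by simp
        have aff: "aff_entry (TA l) i j = (if j = Suc i mod Suc l \<or> i = Suc j mod Suc l then -1 else 0)"
          using ij l1 by simp
        have eqsym: "(Suc i mod Suc l = j) = (j = Suc i mod Suc l)" by auto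
        show ?thesis
        proof (cases "j = Suc i mod Suc l")
          case True
          then have hA: "(j = Suc i mod Suc l) = True" by simp
          have hB: "(i = Suc j mod Suc l) = False" using nb True by blast
          show ?thesis unfolding Q_def aff c3 eqsym c0 hA hB by simp
        next
          case False
          then have hA: "(j = Suc i mod Suc l) = False" by simp
          show ?thesis
          proof (cases "i = Suc j mod Suc l")
            case True
            then have hB: "(i = Suc j mod Suc l) = True" by simp
            show ?thesis unfolding Q_def aff c3 eqsym c0 hA hB by simp
          next
            case False
            then have hB: "(i = Suc j mod Suc l) = False" by simp
            show ?thesis unfolding Q_def aff c3 eqsym c0 hA hB by simp
          qed
        qed
      qed
    qed
    show ?thesis using main ent by simp
  qed
  finally show "subm (Q (TA l) t) [0..<Suc l] $$ (i,j) = (cycB (Suc l) t * (cycB (Suc l) t)\<^sup>T) $$ (i,j)" by simp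
qed (auto simp: subm_def cycB_def)

lemma prod_list_const: "prod_list (map (\<lambda>i. c) xs) = c ^ length xs"
  by (induction xs) auto

lemma det_cycB:
  assumes k: "1 \<le> k"
  shows "det (cycB (Suc k) t) = 1 - t ^ Suc k"
proof -
  let ?n = "Suc k"
  let ?B = "cycB ?n t"
  have B: "?B \<in> carrier_mat ?n ?n" by (simp add: cycB_def)
  have ent: "\<And>i j. i < ?n \<Longrightarrow> j < ?n \<Longrightarrow> ?B $$ (i,j) = (if j = i then 1 else 0) - t * (if j = Suc i mod ?n then 1 else 0)"
    by (simp add: cycB_def)
  have "det ?B = (\<Sum>i<?n. ?B $$ (i,0) * cofactor ?B i 0)"
    by (rule laplace_expansion_column[OF B], simp)
  also have "\<dots> = (\<Sum>i<?n. (if i = 0 then cofactor ?B 0 0 else 0) + (if i = k then - t * cofactor ?B k 0 else 0))"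
  proof (rule sum.cong[OF refl])
    fix i assume "i \<in> {..<?n}"
    hence i: "i < ?n" by simp
    show "?B $$ (i,0) * cofactor ?B i 0 = (if i = 0 then cofactor ?B 0 0 else 0) + (if i = k then - t * cofactor ?B k 0 else 0)"
    proof (cases "i = k")
      case True
      then show ?thesis using k by (simp add: ent)
    next
      case False
      then have "Suc i < ?n" using i by simp
      then have "Suc i mod ?n = Suc i" by (rule mod_less)
      then show ?thesis using False i by (simp add: ent)
    qed
  qed
  also have "\<dots> = cofactor ?B 0 0 - t * cofactor ?B k 0"
    by (simp add: sum.distrib)
  also have "cofactor ?B 0 0 = 1"
  proof -
    let ?A = "mat_delete ?B 0 0"
    have A: "?A \<in> carrier_mat k k" using mat_delete_carrier[OF B] by simp
    have Aent: "\<And>i j. i < k \<Longrightarrow> j < k \<Longrightarrow> ?A $$ (i,j) = ?B $$ (Suc i, Suc j)"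
      by (simp add: mat_delete_def cycB_def)
    have ut: "upper_triangular ?A"
      unfolding upper_triangular_def
    proof (intro allI impI)
      fix i j assume "i < dim_row ?A" "j < i"
      hence i: "i < k" and j: "j < i" using A by auto
      have "Suc (Suc i) mod ?n \<noteq> Suc j"
      proof (cases "Suc (Suc i) < ?n")
        case True
        then show ?thesis using j by simp
      next
        case False
        then have "Suc (Suc i) = ?n" using i by simp
        then show ?thesis by simp
      qed
      then show "?A $$ (i,j) = 0" using i j Aent ent by simp
    qed
    have "det ?A = prod_list (diag_mat ?A)" by (rule det_upper_triangular[OF ut A])
    also have "diag_mat ?A = map (\<lambda>i. 1) [0..<k]"
    proof -
      have "\<And>i. i < k \<Longrightarrow> ?A $$ (i,i) = 1"
      proof -
        fix i assume i: "i < k"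
        have "Suc (Suc i) mod ?n \<noteq> Suc i"
        proof (cases "Suc (Suc i) < ?n")
          case True
          then show ?thesis by simp
        next
          case False
          then have "Suc (Suc i) = ?n" using i by simp
          then show ?thesis by simp
        qed
        then show "?A $$ (i,i) = 1" using i Aent ent by simp
      qed
      then show ?thesis unfolding diag_mat_def using A by auto
    qed
    finally show ?thesis unfolding cofactor_def by (simp add: prod_list_const)
  qed
  also have "cofactor ?B k 0 = (-1)^k * (-t)^k"
  proof -
    let ?A = "mat_delete ?B k 0"
    have A: "?A \<in> carrier_mat k k" using mat_delete_carrier[OF B] by simp
    have Aent: "\<And>i j. i < k \<Longrightarrow> j < k \<Longrightarrow> ?A $$ (i,j) = (if Suc j = i then 1 else 0) - t * (if j = i then 1 else 0)"
      by (simp add: mat_delete_def cycB_def)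
    have "det ?A = prod_list (diag_mat ?A)"
      by (rule det_lower_triangular[OF _ A]) (simp add: Aent)
    also have "diag_mat ?A = map (\<lambda>i. -t) [0..<k]"
      unfolding diag_mat_def using A by (auto simp: Aent)
    finally show ?thesis unfolding cofactor_def by (simp add: prod_list_const)
  qed
  finally show ?thesis
    by (simp add: power_minus[symmetric] flip: power_mult_distrib)
qed

lemma det_E6: "det (subm (Q TE6 t) [0,1,2,3,4,5,6]) = 1 + t^2 - 2 * (t^2)^3 - 2 * (t^2)^4 + (t^2)^6 + (t^2)^7"
proof -
  let ?f = "Q TE6 t"
  have d_0_2: "det (subm ?f [0,2]) = 1 + t^2 + (t^2)^2"
  proof -
    have "det (subm ?f [0,2]) = det (subm ?f ([] @ [0,2]))" by (rule det_subm_perm) (simp add: add_mset_commute)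
    also have "\<dots> = ?f 2 2 * det (subm ?f ([] @ [0])) - ?f 2 0 * ?f 0 2 * det (subm ?f [])"
      by (rule det_subm_leaf) (simp add: Q_def sl_entry_def)
    also have "det (subm ?f ([] @ [0])) = det (subm ?f [0])" by (rule det_subm_perm) (simp add: add_mset_commute)
    finally have e: "det (subm ?f [0,2]) = ?f 2 2 * det (subm ?f [0]) - ?f 2 0 * ?f 0 2 * det (subm ?f [])" .
    show ?thesis unfolding e  by (simp add: Q_def sl_entry_def eval_nat_numeral algebra_simps)
  qed
  have d_0_2_4: "det (subm ?f [0,2,4]) = 1 + t^2 + (t^2)^2 + (t^2)^3"
  proof -
    have "det (subm ?f [0,2,4]) = det (subm ?f ([0] @ [2,4]))" by (rule det_subm_perm) (simp add: add_mset_commute)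
    also have "\<dots> = ?f 4 4 * det (subm ?f ([0] @ [2])) - ?f 4 2 * ?f 2 4 * det (subm ?f [0])"
      by (rule det_subm_leaf) (simp add: Q_def sl_entry_def)
    also have "det (subm ?f ([0] @ [2])) = det (subm ?f [0,2])" by (rule det_subm_perm) (simp add: add_mset_commute)
    finally have e: "det (subm ?f [0,2,4]) = ?f 4 4 * det (subm ?f [0,2]) - ?f 4 2 * ?f 2 4 * det (subm ?f [0])" .
    show ?thesis unfolding e d_0_2 by (simp add: Q_def sl_entry_def eval_nat_numeral algebra_simps)
  qed
  have d_0_2_3_4: "det (subm ?f [0,2,3,4]) = 1 + t^2 + (t^2)^2 + (t^2)^3 + (t^2)^4"
  proof -
    have "det (subm ?f [0,2,3,4]) = det (subm ?f ([0,2] @ [4,3]))" by (rule det_subm_perm) (simp add: add_mset_commute)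
    also have "\<dots> = ?f 3 3 * det (subm ?f ([0,2] @ [4])) - ?f 3 4 * ?f 4 3 * det (subm ?f [0,2])"
      by (rule det_subm_leaf) (simp add: Q_def sl_entry_def)
    also have "det (subm ?f ([0,2] @ [4])) = det (subm ?f [0,2,4])" by (rule det_subm_perm) (simp add: add_mset_commute)
    finally have e: "det (subm ?f [0,2,3,4]) = ?f 3 3 * det (subm ?f [0,2,4]) - ?f 3 4 * ?f 4 3 * det (subm ?f [0,2])" .
    show ?thesis unfolding e d_0_2_4 d_0_2 by (simp add: Q_def sl_entry_def eval_nat_numeral algebra_simps)
  qed
  have d_0_1_2_3_4: "det (subm ?f [0,1,2,3,4]) = 1 + t^2 + (t^2)^2 + (t^2)^3 + (t^2)^4 + (t^2)^5"
  proof -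
    have "det (subm ?f [0,1,2,3,4]) = det (subm ?f ([0,2,4] @ [3,1]))" by (rule det_subm_perm) (simp add: add_mset_commute)
    also have "\<dots> = ?f 1 1 * det (subm ?f ([0,2,4] @ [3])) - ?f 1 3 * ?f 3 1 * det (subm ?f [0,2,4])"
      by (rule det_subm_leaf) (simp add: Q_def sl_entry_def)
    also have "det (subm ?f ([0,2,4] @ [3])) = det (subm ?f [0,2,3,4])" by (rule det_subm_perm) (simp add: add_mset_commute)
    finally have e: "det (subm ?f [0,1,2,3,4]) = ?f 1 1 * det (subm ?f [0,2,3,4]) - ?f 1 3 * ?f 3 1 * det (subm ?f [0,2,4])" .
    show ?thesis unfolding e d_0_2_3_4 d_0_2_4 by (simp add: Q_def sl_entry_def eval_nat_numeral algebra_simps)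
  qed
  have d_0_1: "det (subm ?f [0,1]) = 1 + 2 * t^2 + (t^2)^2"
  proof -
    have "det (subm ?f [0,1]) = det (subm ?f ([0] @ [1]))" by (rule det_subm_perm) (simp add: add_mset_commute)
    also have "\<dots> = ?f 1 1 * det (subm ?f [0])" by (rule det_subm_iso) (simp add: Q_def sl_entry_def)
    also have "\<dots> = 1 + 2 * t^2 + (t^2)^2"  by (simp add: Q_def sl_entry_def eval_nat_numeral algebra_simps)
    finally show ?thesis .
  qed
  have d_0_1_2: "det (subm ?f [0,1,2]) = 1 + 2 * t^2 + 2 * (t^2)^2 + (t^2)^3"
  proof -
    have "det (subm ?f [0,1,2]) = det (subm ?f ([1] @ [0,2]))" by (rule det_subm_perm) (simp add: add_mset_commute)
    also have "\<dots> = ?f 2 2 * det (subm ?f ([1] @ [0])) - ?f 2 0 * ?f 0 2 * det (subm ?f [1])"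
      by (rule det_subm_leaf) (simp add: Q_def sl_entry_def)
    also have "det (subm ?f ([1] @ [0])) = det (subm ?f [0,1])" by (rule det_subm_perm) (simp add: add_mset_commute)
    finally have e: "det (subm ?f [0,1,2]) = ?f 2 2 * det (subm ?f [0,1]) - ?f 2 0 * ?f 0 2 * det (subm ?f [1])" .
    show ?thesis unfolding e d_0_1 by (simp add: Q_def sl_entry_def eval_nat_numeral algebra_simps)
  qed
  have d_0_1_2_3: "det (subm ?f [0,1,2,3]) = 1 + 2 * t^2 + 3 * (t^2)^2 + 2 * (t^2)^3 + (t^2)^4"
  proof -
    have "det (subm ?f [0,1,2,3]) = det (subm ?f ([0,2] @ [1,3]))" by (rule det_subm_perm) (simp add: add_mset_commute)
    also have "\<dots> = ?f 3 3 * det (subm ?f ([0,2] @ [1])) - ?f 3 1 * ?f 1 3 * det (subm ?f [0,2])"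
      by (rule det_subm_leaf) (simp add: Q_def sl_entry_def)
    also have "det (subm ?f ([0,2] @ [1])) = det (subm ?f [0,1,2])" by (rule det_subm_perm) (simp add: add_mset_commute)
    finally have e: "det (subm ?f [0,1,2,3]) = ?f 3 3 * det (subm ?f [0,1,2]) - ?f 3 1 * ?f 1 3 * det (subm ?f [0,2])" .
    show ?thesis unfolding e d_0_1_2 d_0_2 by (simp add: Q_def sl_entry_def eval_nat_numeral algebra_simps)
  qed
  have d_0_1_2_3_4_5: "det (subm ?f [0,1,2,3,4,5]) = 1 + t^2 - (t^2)^3 + (t^2)^5 + (t^2)^6"
  proof -
    have "det (subm ?f [0,1,2,3,4,5]) = det (subm ?f ([0,1,2,3] @ [4,5]))" by (rule det_subm_perm) (simp add: add_mset_commute)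
    also have "\<dots> = ?f 5 5 * det (subm ?f ([0,1,2,3] @ [4])) - ?f 5 4 * ?f 4 5 * det (subm ?f [0,1,2,3])"
      by (rule det_subm_leaf) (simp add: Q_def sl_entry_def)
    also have "det (subm ?f ([0,1,2,3] @ [4])) = det (subm ?f [0,1,2,3,4])" by (rule det_subm_perm) (simp add: add_mset_commute)
    finally have e: "det (subm ?f [0,1,2,3,4,5]) = ?f 5 5 * det (subm ?f [0,1,2,3,4]) - ?f 5 4 * ?f 4 5 * det (subm ?f [0,1,2,3])" .
    show ?thesis unfolding e d_0_1_2_3_4 d_0_1_2_3 by (simp add: Q_def sl_entry_def eval_nat_numeral algebra_simps)
  qed
  have d_0_1_2_3_4_5_6: "det (subm ?f [0,1,2,3,4,5,6]) = 1 + t^2 - 2 * (t^2)^3 - 2 * (t^2)^4 + (t^2)^6 + (t^2)^7"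
  proof -
    have "det (subm ?f [0,1,2,3,4,5,6]) = det (subm ?f ([0,1,2,3,4] @ [5,6]))" by (rule det_subm_perm) (simp add: add_mset_commute)
    also have "\<dots> = ?f 6 6 * det (subm ?f ([0,1,2,3,4] @ [5])) - ?f 6 5 * ?f 5 6 * det (subm ?f [0,1,2,3,4])"
      by (rule det_subm_leaf) (simp add: Q_def sl_entry_def)
    also have "det (subm ?f ([0,1,2,3,4] @ [5])) = det (subm ?f [0,1,2,3,4,5])" by (rule det_subm_perm) (simp add: add_mset_commute)
    finally have e: "det (subm ?f [0,1,2,3,4,5,6]) = ?f 6 6 * det (subm ?f [0,1,2,3,4,5]) - ?f 6 5 * ?f 5 6 * det (subm ?f [0,1,2,3,4])" .
    show ?thesis unfolding e d_0_1_2_3_4_5 d_0_1_2_3_4 by (simp add: Q_def sl_entry_def eval_nat_numeral algebra_simps)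
  qed
  show ?thesis using d_0_1_2_3_4_5_6 .
qed

lemma det_E7: "det (subm (Q TE7 t) [0,1,2,3,4,5,6,7]) = 1 + t^2 - (t^2)^3 - 2 * (t^2)^4 - (t^2)^5 + (t^2)^7 + (t^2)^8"
proof -
  let ?f = "Q TE7 t"
  have d_0_1: "det (subm ?f [0,1]) = 1 + t^2 + (t^2)^2"
  proof -
    have "det (subm ?f [0,1]) = det (subm ?f ([] @ [0,1]))" by (rule det_subm_perm) (simp add: add_mset_commute)
    also have "\<dots> = ?f 1 1 * det (subm ?f ([] @ [0])) - ?f 1 0 * ?f 0 1 * det (subm ?f [])"
      by (rule det_subm_leaf) (simp add: Q_def sl_entry_def)
    also have "det (subm ?f ([] @ [0])) = det (subm ?f [0])" by (rule det_subm_perm) (simp add: add_mset_commute)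
    finally have e: "det (subm ?f [0,1]) = ?f 1 1 * det (subm ?f [0]) - ?f 1 0 * ?f 0 1 * det (subm ?f [])" .
    show ?thesis unfolding e  by (simp add: Q_def sl_entry_def eval_nat_numeral algebra_simps)
  qed
  have d_0_1_3: "det (subm ?f [0,1,3]) = 1 + t^2 + (t^2)^2 + (t^2)^3"
  proof -
    have "det (subm ?f [0,1,3]) = det (subm ?f ([0] @ [1,3]))" by (rule det_subm_perm) (simp add: add_mset_commute)
    also have "\<dots> = ?f 3 3 * det (subm ?f ([0] @ [1])) - ?f 3 1 * ?f 1 3 * det (subm ?f [0])"
      by (rule det_subm_leaf) (simp add: Q_def sl_entry_def)
    also have "det (subm ?f ([0] @ [1])) = det (subm ?f [0,1])" by (rule det_subm_perm) (simp add: add_mset_commute)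
    finally have e: "det (subm ?f [0,1,3]) = ?f 3 3 * det (subm ?f [0,1]) - ?f 3 1 * ?f 1 3 * det (subm ?f [0])" .
    show ?thesis unfolding e d_0_1 by (simp add: Q_def sl_entry_def eval_nat_numeral algebra_simps)
  qed
  have d_0_1_3_4: "det (subm ?f [0,1,3,4]) = 1 + t^2 + (t^2)^2 + (t^2)^3 + (t^2)^4"
  proof -
    have "det (subm ?f [0,1,3,4]) = det (subm ?f ([0,1] @ [3,4]))" by (rule det_subm_perm) (simp add: add_mset_commute)
    also have "\<dots> = ?f 4 4 * det (subm ?f ([0,1] @ [3])) - ?f 4 3 * ?f 3 4 * det (subm ?f [0,1])"
      by (rule det_subm_leaf) (simp add: Q_def sl_entry_def)
    also have "det (subm ?f ([0,1] @ [3])) = det (subm ?f [0,1,3])" by (rule det_subm_perm) (simp add: add_mset_commute)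
    finally have e: "det (subm ?f [0,1,3,4]) = ?f 4 4 * det (subm ?f [0,1,3]) - ?f 4 3 * ?f 3 4 * det (subm ?f [0,1])" .
    show ?thesis unfolding e d_0_1_3 d_0_1 by (simp add: Q_def sl_entry_def eval_nat_numeral algebra_simps)
  qed
  have d_0_1_2_3_4: "det (subm ?f [0,1,2,3,4]) = 1 + t^2 + (t^2)^2 + (t^2)^3 + (t^2)^4 + (t^2)^5"
  proof -
    have "det (subm ?f [0,1,2,3,4]) = det (subm ?f ([0,1,3] @ [4,2]))" by (rule det_subm_perm) (simp add: add_mset_commute)
    also have "\<dots> = ?f 2 2 * det (subm ?f ([0,1,3] @ [4])) - ?f 2 4 * ?f 4 2 * det (subm ?f [0,1,3])"
      by (rule det_subm_leaf) (simp add: Q_def sl_entry_def)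
    also have "det (subm ?f ([0,1,3] @ [4])) = det (subm ?f [0,1,3,4])" by (rule det_subm_perm) (simp add: add_mset_commute)
    finally have e: "det (subm ?f [0,1,2,3,4]) = ?f 2 2 * det (subm ?f [0,1,3,4]) - ?f 2 4 * ?f 4 2 * det (subm ?f [0,1,3])" .
    show ?thesis unfolding e d_0_1_3_4 d_0_1_3 by (simp add: Q_def sl_entry_def eval_nat_numeral algebra_simps)
  qed
  have d_0_1_2: "det (subm ?f [0,1,2]) = 1 + 2 * t^2 + 2 * (t^2)^2 + (t^2)^3"
  proof -
    have "det (subm ?f [0,1,2]) = det (subm ?f ([0,1] @ [2]))" by (rule det_subm_perm) (simp add: add_mset_commute)
    also have "\<dots> = ?f 2 2 * det (subm ?f [0,1])" by (rule det_subm_iso) (simp add: Q_def sl_entry_def)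
    also have "\<dots> = 1 + 2 * t^2 + 2 * (t^2)^2 + (t^2)^3" using d_0_1 by (simp add: Q_def sl_entry_def eval_nat_numeral algebra_simps)
    finally show ?thesis .
  qed
  have d_0_2: "det (subm ?f [0,2]) = 1 + 2 * t^2 + (t^2)^2"
  proof -
    have "det (subm ?f [0,2]) = det (subm ?f ([0] @ [2]))" by (rule det_subm_perm) (simp add: add_mset_commute)
    also have "\<dots> = ?f 2 2 * det (subm ?f [0])" by (rule det_subm_iso) (simp add: Q_def sl_entry_def)
    also have "\<dots> = 1 + 2 * t^2 + (t^2)^2"  by (simp add: Q_def sl_entry_def eval_nat_numeral algebra_simps)
    finally show ?thesis .
  qed
  have d_0_1_2_3: "det (subm ?f [0,1,2,3]) = 1 + 2 * t^2 + 2 * (t^2)^2 + 2 * (t^2)^3 + (t^2)^4"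
  proof -
    have "det (subm ?f [0,1,2,3]) = det (subm ?f ([0,2] @ [1,3]))" by (rule det_subm_perm) (simp add: add_mset_commute)
    also have "\<dots> = ?f 3 3 * det (subm ?f ([0,2] @ [1])) - ?f 3 1 * ?f 1 3 * det (subm ?f [0,2])"
      by (rule det_subm_leaf) (simp add: Q_def sl_entry_def)
    also have "det (subm ?f ([0,2] @ [1])) = det (subm ?f [0,1,2])" by (rule det_subm_perm) (simp add: add_mset_commute)
    finally have e: "det (subm ?f [0,1,2,3]) = ?f 3 3 * det (subm ?f [0,1,2]) - ?f 3 1 * ?f 1 3 * det (subm ?f [0,2])" .
    show ?thesis unfolding e d_0_1_2 d_0_2 by (simp add: Q_def sl_entry_def eval_nat_numeral algebra_simps)
  qed
  have d_0_1_2_3_4_5: "det (subm ?f [0,1,2,3,4,5]) = 1 + t^2 + (t^2)^5 + (t^2)^6"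
  proof -
    have "det (subm ?f [0,1,2,3,4,5]) = det (subm ?f ([0,1,2,3] @ [4,5]))" by (rule det_subm_perm) (simp add: add_mset_commute)
    also have "\<dots> = ?f 5 5 * det (subm ?f ([0,1,2,3] @ [4])) - ?f 5 4 * ?f 4 5 * det (subm ?f [0,1,2,3])"
      by (rule det_subm_leaf) (simp add: Q_def sl_entry_def)
    also have "det (subm ?f ([0,1,2,3] @ [4])) = det (subm ?f [0,1,2,3,4])" by (rule det_subm_perm) (simp add: add_mset_commute)
    finally have e: "det (subm ?f [0,1,2,3,4,5]) = ?f 5 5 * det (subm ?f [0,1,2,3,4]) - ?f 5 4 * ?f 4 5 * det (subm ?f [0,1,2,3])" .
    show ?thesis unfolding e d_0_1_2_3_4 d_0_1_2_3 by (simp add: Q_def sl_entry_def eval_nat_numeral algebra_simps)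
  qed
  have d_0_1_2_3_4_5_6: "det (subm ?f [0,1,2,3,4,5,6]) = 1 + t^2 - (t^2)^3 - (t^2)^4 + (t^2)^6 + (t^2)^7"
  proof -
    have "det (subm ?f [0,1,2,3,4,5,6]) = det (subm ?f ([0,1,2,3,4] @ [5,6]))" by (rule det_subm_perm) (simp add: add_mset_commute)
    also have "\<dots> = ?f 6 6 * det (subm ?f ([0,1,2,3,4] @ [5])) - ?f 6 5 * ?f 5 6 * det (subm ?f [0,1,2,3,4])"
      by (rule det_subm_leaf) (simp add: Q_def sl_entry_def)
    also have "det (subm ?f ([0,1,2,3,4] @ [5])) = det (subm ?f [0,1,2,3,4,5])" by (rule det_subm_perm) (simp add: add_mset_commute)
    finally have e: "det (subm ?f [0,1,2,3,4,5,6]) = ?f 6 6 * det (subm ?f [0,1,2,3,4,5]) - ?f 6 5 * ?f 5 6 * det (subm ?f [0,1,2,3,4])" .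
    show ?thesis unfolding e d_0_1_2_3_4_5 d_0_1_2_3_4 by (simp add: Q_def sl_entry_def eval_nat_numeral algebra_simps)
  qed
  have d_0_1_2_3_4_5_6_7: "det (subm ?f [0,1,2,3,4,5,6,7]) = 1 + t^2 - (t^2)^3 - 2 * (t^2)^4 - (t^2)^5 + (t^2)^7 + (t^2)^8"
  proof -
    have "det (subm ?f [0,1,2,3,4,5,6,7]) = det (subm ?f ([0,1,2,3,4,5] @ [6,7]))" by (rule det_subm_perm) (simp add: add_mset_commute)
    also have "\<dots> = ?f 7 7 * det (subm ?f ([0,1,2,3,4,5] @ [6])) - ?f 7 6 * ?f 6 7 * det (subm ?f [0,1,2,3,4,5])"
      by (rule det_subm_leaf) (simp add: Q_def sl_entry_def)
    also have "det (subm ?f ([0,1,2,3,4,5] @ [6])) = det (subm ?f [0,1,2,3,4,5,6])" by (rule det_subm_perm) (simp add: add_mset_commute)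
    finally have e: "det (subm ?f [0,1,2,3,4,5,6,7]) = ?f 7 7 * det (subm ?f [0,1,2,3,4,5,6]) - ?f 7 6 * ?f 6 7 * det (subm ?f [0,1,2,3,4,5])" .
    show ?thesis unfolding e d_0_1_2_3_4_5_6 d_0_1_2_3_4_5 by (simp add: Q_def sl_entry_def eval_nat_numeral algebra_simps)
  qed
  show ?thesis using d_0_1_2_3_4_5_6_7 .
qed

lemma det_E8: "det (subm (Q TE8 t) [0,1,2,3,4,5,6,7,8]) = 1 + t^2 - (t^2)^3 - (t^2)^4 - (t^2)^5 - (t^2)^6 + (t^2)^8 + (t^2)^9"
proof -
  let ?f = "Q TE8 t"
  have d_0_8: "det (subm ?f [0,8]) = 1 + t^2 + (t^2)^2"
  proof -
    have "det (subm ?f [0,8]) = det (subm ?f ([] @ [0,8]))" by (rule det_subm_perm) (simp add: add_mset_commute)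
    also have "\<dots> = ?f 8 8 * det (subm ?f ([] @ [0])) - ?f 8 0 * ?f 0 8 * det (subm ?f [])"
      by (rule det_subm_leaf) (simp add: Q_def sl_entry_def)
    also have "det (subm ?f ([] @ [0])) = det (subm ?f [0])" by (rule det_subm_perm) (simp add: add_mset_commute)
    finally have e: "det (subm ?f [0,8]) = ?f 8 8 * det (subm ?f [0]) - ?f 8 0 * ?f 0 8 * det (subm ?f [])" .
    show ?thesis unfolding e  by (simp add: Q_def sl_entry_def eval_nat_numeral algebra_simps)
  qed
  have d_0_7_8: "det (subm ?f [0,7,8]) = 1 + t^2 + (t^2)^2 + (t^2)^3"
  proof -
    have "det (subm ?f [0,7,8]) = det (subm ?f ([0] @ [8,7]))" by (rule det_subm_perm) (simp add: add_mset_commute)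
    also have "\<dots> = ?f 7 7 * det (subm ?f ([0] @ [8])) - ?f 7 8 * ?f 8 7 * det (subm ?f [0])"
      by (rule det_subm_leaf) (simp add: Q_def sl_entry_def)
    also have "det (subm ?f ([0] @ [8])) = det (subm ?f [0,8])" by (rule det_subm_perm) (simp add: add_mset_commute)
    finally have e: "det (subm ?f [0,7,8]) = ?f 7 7 * det (subm ?f [0,8]) - ?f 7 8 * ?f 8 7 * det (subm ?f [0])" .
    show ?thesis unfolding e d_0_8 by (simp add: Q_def sl_entry_def eval_nat_numeral algebra_simps)
  qed
  have d_0_6_7_8: "det (subm ?f [0,6,7,8]) = 1 + t^2 + (t^2)^2 + (t^2)^3 + (t^2)^4"
  proof -
    have "det (subm ?f [0,6,7,8]) = det (subm ?f ([0,8] @ [7,6]))" by (rule det_subm_perm) (simp add: add_mset_commute)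
    also have "\<dots> = ?f 6 6 * det (subm ?f ([0,8] @ [7])) - ?f 6 7 * ?f 7 6 * det (subm ?f [0,8])"
      by (rule det_subm_leaf) (simp add: Q_def sl_entry_def)
    also have "det (subm ?f ([0,8] @ [7])) = det (subm ?f [0,7,8])" by (rule det_subm_perm) (simp add: add_mset_commute)
    finally have e: "det (subm ?f [0,6,7,8]) = ?f 6 6 * det (subm ?f [0,7,8]) - ?f 6 7 * ?f 7 6 * det (subm ?f [0,8])" .
    show ?thesis unfolding e d_0_7_8 d_0_8 by (simp add: Q_def sl_entry_def eval_nat_numeral algebra_simps)
  qed
  have d_0_5_6_7_8: "det (subm ?f [0,5,6,7,8]) = 1 + t^2 + (t^2)^2 + (t^2)^3 + (t^2)^4 + (t^2)^5"
  proof -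
    have "det (subm ?f [0,5,6,7,8]) = det (subm ?f ([0,7,8] @ [6,5]))" by (rule det_subm_perm) (simp add: add_mset_commute)
    also have "\<dots> = ?f 5 5 * det (subm ?f ([0,7,8] @ [6])) - ?f 5 6 * ?f 6 5 * det (subm ?f [0,7,8])"
      by (rule det_subm_leaf) (simp add: Q_def sl_entry_def)
    also have "det (subm ?f ([0,7,8] @ [6])) = det (subm ?f [0,6,7,8])" by (rule det_subm_perm) (simp add: add_mset_commute)
    finally have e: "det (subm ?f [0,5,6,7,8]) = ?f 5 5 * det (subm ?f [0,6,7,8]) - ?f 5 6 * ?f 6 5 * det (subm ?f [0,7,8])" .
    show ?thesis unfolding e d_0_6_7_8 d_0_7_8 by (simp add: Q_def sl_entry_def eval_nat_numeral algebra_simps)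
  qed
  have d_0_4_5_6_7_8: "det (subm ?f [0,4,5,6,7,8]) = 1 + t^2 + (t^2)^2 + (t^2)^3 + (t^2)^4 + (t^2)^5 + (t^2)^6"
  proof -
    have "det (subm ?f [0,4,5,6,7,8]) = det (subm ?f ([0,6,7,8] @ [5,4]))" by (rule det_subm_perm) (simp add: add_mset_commute)
    also have "\<dots> = ?f 4 4 * det (subm ?f ([0,6,7,8] @ [5])) - ?f 4 5 * ?f 5 4 * det (subm ?f [0,6,7,8])"
      by (rule det_subm_leaf) (simp add: Q_def sl_entry_def)
    also have "det (subm ?f ([0,6,7,8] @ [5])) = det (subm ?f [0,5,6,7,8])" by (rule det_subm_perm) (simp add: add_mset_commute)
    finally have e: "det (subm ?f [0,4,5,6,7,8]) = ?f 4 4 * det (subm ?f [0,5,6,7,8]) - ?f 4 5 * ?f 5 4 * det (subm ?f [0,6,7,8])" .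
    show ?thesis unfolding e d_0_5_6_7_8 d_0_6_7_8 by (simp add: Q_def sl_entry_def eval_nat_numeral algebra_simps)
  qed
  have d_0_3_4_5_6_7_8: "det (subm ?f [0,3,4,5,6,7,8]) = 1 + t^2 + (t^2)^2 + (t^2)^3 + (t^2)^4 + (t^2)^5 + (t^2)^6 + (t^2)^7"
  proof -
    have "det (subm ?f [0,3,4,5,6,7,8]) = det (subm ?f ([0,5,6,7,8] @ [4,3]))" by (rule det_subm_perm) (simp add: add_mset_commute)
    also have "\<dots> = ?f 3 3 * det (subm ?f ([0,5,6,7,8] @ [4])) - ?f 3 4 * ?f 4 3 * det (subm ?f [0,5,6,7,8])"
      by (rule det_subm_leaf) (simp add: Q_def sl_entry_def)
    also have "det (subm ?f ([0,5,6,7,8] @ [4])) = det (subm ?f [0,4,5,6,7,8])" by (rule det_subm_perm) (simp add: add_mset_commute)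
    finally have e: "det (subm ?f [0,3,4,5,6,7,8]) = ?f 3 3 * det (subm ?f [0,4,5,6,7,8]) - ?f 3 4 * ?f 4 3 * det (subm ?f [0,5,6,7,8])" .
    show ?thesis unfolding e d_0_4_5_6_7_8 d_0_5_6_7_8 by (simp add: Q_def sl_entry_def eval_nat_numeral algebra_simps)
  qed
  have d_0_1_3_4_5_6_7_8: "det (subm ?f [0,1,3,4,5,6,7,8]) = 1 + t^2 + (t^2)^2 + (t^2)^3 + (t^2)^4 + (t^2)^5 + (t^2)^6 + (t^2)^7 + (t^2)^8"
  proof -
    have "det (subm ?f [0,1,3,4,5,6,7,8]) = det (subm ?f ([0,4,5,6,7,8] @ [3,1]))" by (rule det_subm_perm) (simp add: add_mset_commute)
    also have "\<dots> = ?f 1 1 * det (subm ?f ([0,4,5,6,7,8] @ [3])) - ?f 1 3 * ?f 3 1 * det (subm ?f [0,4,5,6,7,8])"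
      by (rule det_subm_leaf) (simp add: Q_def sl_entry_def)
    also have "det (subm ?f ([0,4,5,6,7,8] @ [3])) = det (subm ?f [0,3,4,5,6,7,8])" by (rule det_subm_perm) (simp add: add_mset_commute)
    finally have e: "det (subm ?f [0,1,3,4,5,6,7,8]) = ?f 1 1 * det (subm ?f [0,3,4,5,6,7,8]) - ?f 1 3 * ?f 3 1 * det (subm ?f [0,4,5,6,7,8])" .
    show ?thesis unfolding e d_0_3_4_5_6_7_8 d_0_4_5_6_7_8 by (simp add: Q_def sl_entry_def eval_nat_numeral algebra_simps)
  qed
  have d_0_1: "det (subm ?f [0,1]) = 1 + 2 * t^2 + (t^2)^2"
  proof -
    have "det (subm ?f [0,1]) = det (subm ?f ([0] @ [1]))" by (rule det_subm_perm) (simp add: add_mset_commute)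
    also have "\<dots> = ?f 1 1 * det (subm ?f [0])" by (rule det_subm_iso) (simp add: Q_def sl_entry_def)
    also have "\<dots> = 1 + 2 * t^2 + (t^2)^2"  by (simp add: Q_def sl_entry_def eval_nat_numeral algebra_simps)
    finally show ?thesis .
  qed
  have d_0_1_3: "det (subm ?f [0,1,3]) = 1 + 2 * t^2 + 2 * (t^2)^2 + (t^2)^3"
  proof -
    have "det (subm ?f [0,1,3]) = det (subm ?f ([0] @ [1,3]))" by (rule det_subm_perm) (simp add: add_mset_commute)
    also have "\<dots> = ?f 3 3 * det (subm ?f ([0] @ [1])) - ?f 3 1 * ?f 1 3 * det (subm ?f [0])"
      by (rule det_subm_leaf) (simp add: Q_def sl_entry_def)
    also have "det (subm ?f ([0] @ [1])) = det (subm ?f [0,1])" by (rule det_subm_perm) (simp add: add_mset_commute)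
    finally have e: "det (subm ?f [0,1,3]) = ?f 3 3 * det (subm ?f [0,1]) - ?f 3 1 * ?f 1 3 * det (subm ?f [0])" .
    show ?thesis unfolding e d_0_1 by (simp add: Q_def sl_entry_def eval_nat_numeral algebra_simps)
  qed
  have d_1_3: "det (subm ?f [1,3]) = 1 + t^2 + (t^2)^2"
  proof -
    have "det (subm ?f [1,3]) = det (subm ?f ([] @ [1,3]))" by (rule det_subm_perm) (simp add: add_mset_commute)
    also have "\<dots> = ?f 3 3 * det (subm ?f ([] @ [1])) - ?f 3 1 * ?f 1 3 * det (subm ?f [])"
      by (rule det_subm_leaf) (simp add: Q_def sl_entry_def)
    also have "det (subm ?f ([] @ [1])) = det (subm ?f [1])" by (rule det_subm_perm) (simp add: add_mset_commute)
    finally have e: "det (subm ?f [1,3]) = ?f 3 3 * det (subm ?f [1]) - ?f 3 1 * ?f 1 3 * det (subm ?f [])" .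
    show ?thesis unfolding e  by (simp add: Q_def sl_entry_def eval_nat_numeral algebra_simps)
  qed
  have d_0_1_3_8: "det (subm ?f [0,1,3,8]) = 1 + 2 * t^2 + 3 * (t^2)^2 + 2 * (t^2)^3 + (t^2)^4"
  proof -
    have "det (subm ?f [0,1,3,8]) = det (subm ?f ([1,3] @ [0,8]))" by (rule det_subm_perm) (simp add: add_mset_commute)
    also have "\<dots> = ?f 8 8 * det (subm ?f ([1,3] @ [0])) - ?f 8 0 * ?f 0 8 * det (subm ?f [1,3])"
      by (rule det_subm_leaf) (simp add: Q_def sl_entry_def)
    also have "det (subm ?f ([1,3] @ [0])) = det (subm ?f [0,1,3])" by (rule det_subm_perm) (simp add: add_mset_commute)
    finally have e: "det (subm ?f [0,1,3,8]) = ?f 8 8 * det (subm ?f [0,1,3]) - ?f 8 0 * ?f 0 8 * det (subm ?f [1,3])" .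
    show ?thesis unfolding e d_0_1_3 d_1_3 by (simp add: Q_def sl_entry_def eval_nat_numeral algebra_simps)
  qed
  have d_0_1_3_7_8: "det (subm ?f [0,1,3,7,8]) = 1 + 2 * t^2 + 3 * (t^2)^2 + 3 * (t^2)^3 + 2 * (t^2)^4 + (t^2)^5"
  proof -
    have "det (subm ?f [0,1,3,7,8]) = det (subm ?f ([0,1,3] @ [8,7]))" by (rule det_subm_perm) (simp add: add_mset_commute)
    also have "\<dots> = ?f 7 7 * det (subm ?f ([0,1,3] @ [8])) - ?f 7 8 * ?f 8 7 * det (subm ?f [0,1,3])"
      by (rule det_subm_leaf) (simp add: Q_def sl_entry_def)
    also have "det (subm ?f ([0,1,3] @ [8])) = det (subm ?f [0,1,3,8])" by (rule det_subm_perm) (simp add: add_mset_commute)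
    finally have e: "det (subm ?f [0,1,3,7,8]) = ?f 7 7 * det (subm ?f [0,1,3,8]) - ?f 7 8 * ?f 8 7 * det (subm ?f [0,1,3])" .
    show ?thesis unfolding e d_0_1_3_8 d_0_1_3 by (simp add: Q_def sl_entry_def eval_nat_numeral algebra_simps)
  qed
  have d_0_1_3_6_7_8: "det (subm ?f [0,1,3,6,7,8]) = 1 + 2 * t^2 + 3 * (t^2)^2 + 3 * (t^2)^3 + 3 * (t^2)^4 + 2 * (t^2)^5 + (t^2)^6"
  proof -
    have "det (subm ?f [0,1,3,6,7,8]) = det (subm ?f ([0,1,3,8] @ [7,6]))" by (rule det_subm_perm) (simp add: add_mset_commute)
    also have "\<dots> = ?f 6 6 * det (subm ?f ([0,1,3,8] @ [7])) - ?f 6 7 * ?f 7 6 * det (subm ?f [0,1,3,8])"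
      by (rule det_subm_leaf) (simp add: Q_def sl_entry_def)
    also have "det (subm ?f ([0,1,3,8] @ [7])) = det (subm ?f [0,1,3,7,8])" by (rule det_subm_perm) (simp add: add_mset_commute)
    finally have e: "det (subm ?f [0,1,3,6,7,8]) = ?f 6 6 * det (subm ?f [0,1,3,7,8]) - ?f 6 7 * ?f 7 6 * det (subm ?f [0,1,3,8])" .
    show ?thesis unfolding e d_0_1_3_7_8 d_0_1_3_8 by (simp add: Q_def sl_entry_def eval_nat_numeral algebra_simps)
  qed
  have d_0_1_3_5_6_7_8: "det (subm ?f [0,1,3,5,6,7,8]) = 1 + 2 * t^2 + 3 * (t^2)^2 + 3 * (t^2)^3 + 3 * (t^2)^4 + 3 * (t^2)^5 + 2 * (t^2)^6 + (t^2)^7"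
  proof -
    have "det (subm ?f [0,1,3,5,6,7,8]) = det (subm ?f ([0,1,3,7,8] @ [6,5]))" by (rule det_subm_perm) (simp add: add_mset_commute)
    also have "\<dots> = ?f 5 5 * det (subm ?f ([0,1,3,7,8] @ [6])) - ?f 5 6 * ?f 6 5 * det (subm ?f [0,1,3,7,8])"
      by (rule det_subm_leaf) (simp add: Q_def sl_entry_def)
    also have "det (subm ?f ([0,1,3,7,8] @ [6])) = det (subm ?f [0,1,3,6,7,8])" by (rule det_subm_perm) (simp add: add_mset_commute)
    finally have e: "det (subm ?f [0,1,3,5,6,7,8]) = ?f 5 5 * det (subm ?f [0,1,3,6,7,8]) - ?f 5 6 * ?f 6 5 * det (subm ?f [0,1,3,7,8])" .
    show ?thesis unfolding e d_0_1_3_6_7_8 d_0_1_3_7_8 by (simp add: Q_def sl_entry_def eval_nat_numeral algebra_simps)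
  qed
  have d_0_1_2_3_4_5_6_7_8: "det (subm ?f [0,1,2,3,4,5,6,7,8]) = 1 + t^2 - (t^2)^3 - (t^2)^4 - (t^2)^5 - (t^2)^6 + (t^2)^8 + (t^2)^9"
  proof -
    have "det (subm ?f [0,1,2,3,4,5,6,7,8]) = det (subm ?f ([0,1,3,5,6,7,8] @ [4,2]))" by (rule det_subm_perm) (simp add: add_mset_commute)
    also have "\<dots> = ?f 2 2 * det (subm ?f ([0,1,3,5,6,7,8] @ [4])) - ?f 2 4 * ?f 4 2 * det (subm ?f [0,1,3,5,6,7,8])"
      by (rule det_subm_leaf) (simp add: Q_def sl_entry_def)
    also have "det (subm ?f ([0,1,3,5,6,7,8] @ [4])) = det (subm ?f [0,1,3,4,5,6,7,8])" by (rule det_subm_perm) (simp add: add_mset_commute)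
    finally have e: "det (subm ?f [0,1,2,3,4,5,6,7,8]) = ?f 2 2 * det (subm ?f [0,1,3,4,5,6,7,8]) - ?f 2 4 * ?f 4 2 * det (subm ?f [0,1,3,5,6,7,8])" .
    show ?thesis unfolding e d_0_1_3_4_5_6_7_8 d_0_1_3_5_6_7_8 by (simp add: Q_def sl_entry_def eval_nat_numeral algebra_simps)
  qed
  show ?thesis using d_0_1_2_3_4_5_6_7_8 .
qed

lemma det_F4: "det (subm (Q TF4 t) [0,1,2,3,4]) = 1 - (t^2)^2 - (t^2)^3 + (t^2)^5"
proof -
  let ?f = "Q TF4 t"
  have d_0_1: "det (subm ?f [0,1]) = 1 + t^2 + (t^2)^2"
  proof -
    have "det (subm ?f [0,1]) = det (subm ?f ([] @ [0,1]))" by (rule det_subm_perm) (simp add: add_mset_commute)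
    also have "\<dots> = ?f 1 1 * det (subm ?f ([] @ [0])) - ?f 1 0 * ?f 0 1 * det (subm ?f [])"
      by (rule det_subm_leaf) (simp add: Q_def sl_entry_def)
    also have "det (subm ?f ([] @ [0])) = det (subm ?f [0])" by (rule det_subm_perm) (simp add: add_mset_commute)
    finally have e: "det (subm ?f [0,1]) = ?f 1 1 * det (subm ?f [0]) - ?f 1 0 * ?f 0 1 * det (subm ?f [])" .
    show ?thesis unfolding e  by (simp add: Q_def sl_entry_def eval_nat_numeral algebra_simps)
  qed
  have d_0_1_2: "det (subm ?f [0,1,2]) = 1 + t^2 + (t^2)^2 + (t^2)^3"
  proof -
    have "det (subm ?f [0,1,2]) = det (subm ?f ([0] @ [1,2]))" by (rule det_subm_perm) (simp add: add_mset_commute)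
    also have "\<dots> = ?f 2 2 * det (subm ?f ([0] @ [1])) - ?f 2 1 * ?f 1 2 * det (subm ?f [0])"
      by (rule det_subm_leaf) (simp add: Q_def sl_entry_def)
    also have "det (subm ?f ([0] @ [1])) = det (subm ?f [0,1])" by (rule det_subm_perm) (simp add: add_mset_commute)
    finally have e: "det (subm ?f [0,1,2]) = ?f 2 2 * det (subm ?f [0,1]) - ?f 2 1 * ?f 1 2 * det (subm ?f [0])" .
    show ?thesis unfolding e d_0_1 by (simp add: Q_def sl_entry_def eval_nat_numeral algebra_simps)
  qed
  have d_0_1_2_3: "det (subm ?f [0,1,2,3]) = 1 + (t^2)^4"
  proof -
    have "det (subm ?f [0,1,2,3]) = det (subm ?f ([0,1] @ [2,3]))" by (rule det_subm_perm) (simp add: add_mset_commute)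
    also have "\<dots> = ?f 3 3 * det (subm ?f ([0,1] @ [2])) - ?f 3 2 * ?f 2 3 * det (subm ?f [0,1])"
      by (rule det_subm_leaf) (simp add: Q_def sl_entry_def)
    also have "det (subm ?f ([0,1] @ [2])) = det (subm ?f [0,1,2])" by (rule det_subm_perm) (simp add: add_mset_commute)
    finally have e: "det (subm ?f [0,1,2,3]) = ?f 3 3 * det (subm ?f [0,1,2]) - ?f 3 2 * ?f 2 3 * det (subm ?f [0,1])" .
    show ?thesis unfolding e d_0_1_2 d_0_1 by (simp add: Q_def sl_entry_def eval_nat_numeral algebra_simps)
  qed
  have d_0_1_2_3_4: "det (subm ?f [0,1,2,3,4]) = 1 - (t^2)^2 - (t^2)^3 + (t^2)^5"
  proof -
    have "det (subm ?f [0,1,2,3,4]) = det (subm ?f ([0,1,2] @ [3,4]))" by (rule det_subm_perm) (simp add: add_mset_commute)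
    also have "\<dots> = ?f 4 4 * det (subm ?f ([0,1,2] @ [3])) - ?f 4 3 * ?f 3 4 * det (subm ?f [0,1,2])"
      by (rule det_subm_leaf) (simp add: Q_def sl_entry_def)
    also have "det (subm ?f ([0,1,2] @ [3])) = det (subm ?f [0,1,2,3])" by (rule det_subm_perm) (simp add: add_mset_commute)
    finally have e: "det (subm ?f [0,1,2,3,4]) = ?f 4 4 * det (subm ?f [0,1,2,3]) - ?f 4 3 * ?f 3 4 * det (subm ?f [0,1,2])" .
    show ?thesis unfolding e d_0_1_2_3 d_0_1_2 by (simp add: Q_def sl_entry_def eval_nat_numeral algebra_simps)
  qed
  show ?thesis using d_0_1_2_3_4 .
qed

lemma det_G2: "det (subm (Q TG2 t) [0,1,2]) = 1 - t^2 - (t^2)^2 + (t^2)^3"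
proof -
  let ?f = "Q TG2 t"
  have d_0_1: "det (subm ?f [0,1]) = 1 + t^2 + (t^2)^2"
  proof -
    have "det (subm ?f [0,1]) = det (subm ?f ([] @ [0,1]))" by (rule det_subm_perm) (simp add: add_mset_commute)
    also have "\<dots> = ?f 1 1 * det (subm ?f ([] @ [0])) - ?f 1 0 * ?f 0 1 * det (subm ?f [])"
      by (rule det_subm_leaf) (simp add: Q_def sl_entry_def)
    also have "det (subm ?f ([] @ [0])) = det (subm ?f [0])" by (rule det_subm_perm) (simp add: add_mset_commute)
    finally have e: "det (subm ?f [0,1]) = ?f 1 1 * det (subm ?f [0]) - ?f 1 0 * ?f 0 1 * det (subm ?f [])" .
    show ?thesis unfolding e  by (simp add: Q_def sl_entry_def eval_nat_numeral algebra_simps)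
  qed
  have d_0_1_2: "det (subm ?f [0,1,2]) = 1 - t^2 - (t^2)^2 + (t^2)^3"
  proof -
    have "det (subm ?f [0,1,2]) = det (subm ?f ([0] @ [1,2]))" by (rule det_subm_perm) (simp add: add_mset_commute)
    also have "\<dots> = ?f 2 2 * det (subm ?f ([0] @ [1])) - ?f 2 1 * ?f 1 2 * det (subm ?f [0])"
      by (rule det_subm_leaf) (simp add: Q_def sl_entry_def)
    also have "det (subm ?f ([0] @ [1])) = det (subm ?f [0,1])" by (rule det_subm_perm) (simp add: add_mset_commute)
    finally have e: "det (subm ?f [0,1,2]) = ?f 2 2 * det (subm ?f [0,1]) - ?f 2 1 * ?f 1 2 * det (subm ?f [0])" .
    show ?thesis unfolding e d_0_1 by (simp add: Q_def sl_entry_def eval_nat_numeral algebra_simps)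
  qed
  show ?thesis using d_0_1_2 .
qed

lemma pow2_nat: "pow2 t (of_nat k) = t^(2*k)"
proof -
  have "2 * (of_nat k :: rat) = of_nat (2*k)" by simp
  then show ?thesis unfolding pow2_def by (simp only: floor_of_nat nat_int)
qed

lemma pow2_half: "pow2 t (of_nat k / 2) = t^k"
proof -
  have "2 * (of_nat k / 2 :: rat) = of_nat k" by simp
  then show ?thesis unfolding pow2_def by (simp only: floor_of_nat nat_int)
qed

lemma pow2_num: "pow2 t 1 = t^2" "pow2 t 2 = t^4" "pow2 t 3 = t^6" "pow2 t 4 = t^8" "pow2 t 5 = t^10"
  by (simp_all add: pow2_def)

lemma m_E6:
  assumes nz: "1 - t\<^sup>2 \<noteq> 0"
  shows "det (qcartan_aff TE6 t) = (case pqr TE6 of (p, q, r) \<Rightarrow>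
       (1 - pow2 t p) * (1 - pow2 t q) * (1 - pow2 t r) / (1 - t\<^sup>2))"
proof -
  have u: "[0..<Suc (rank_of TE6)] = [0,1,2,3,4,5,6]" by (simp add: eval_nat_numeral)
  have q: "qcartan_aff TE6 t = subm (Q TE6 t) [0..<Suc (rank_of TE6)]" by (rule qcartan_subm) simp
  have "det (qcartan_aff TE6 t) = det (subm (Q TE6 t) [0,1,2,3,4,5,6])" unfolding q u ..
  also have "\<dots> = 1 + t^2 - 2 * (t^2)^3 - 2 * (t^2)^4 + (t^2)^6 + (t^2)^7" by (rule det_E6)
  also have "\<dots> = (1 - t^6) * (1 - t^6) * (1 - t^4) / (1 - t\<^sup>2)"
    by (rule eq_divide_imp[OF nz]) (simp add: eval_nat_numeral algebra_simps)
  also have "\<dots> = (case pqr TE6 of (p, q, r) \<Rightarrow>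
       (1 - pow2 t p) * (1 - pow2 t q) * (1 - pow2 t r) / (1 - t\<^sup>2))" by (simp add: pow2_num)
  finally show ?thesis .
qed

lemma m_E7:
  assumes nz: "1 - t\<^sup>2 \<noteq> 0"
  shows "det (qcartan_aff TE7 t) = (case pqr TE7 of (p, q, r) \<Rightarrow>
       (1 - pow2 t p) * (1 - pow2 t q) * (1 - pow2 t r) / (1 - t\<^sup>2))"
proof -
  have u: "[0..<Suc (rank_of TE7)] = [0,1,2,3,4,5,6,7]" by (simp add: eval_nat_numeral)
  have q: "qcartan_aff TE7 t = subm (Q TE7 t) [0..<Suc (rank_of TE7)]" by (rule qcartan_subm) simp
  have "det (qcartan_aff TE7 t) = det (subm (Q TE7 t) [0,1,2,3,4,5,6,7])" unfolding q u ..
  also have "\<dots> = 1 + t^2 - (t^2)^3 - 2 * (t^2)^4 - (t^2)^5 + (t^2)^7 + (t^2)^8" by (rule det_E7)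
  also have "\<dots> = (1 - t^8) * (1 - t^6) * (1 - t^4) / (1 - t\<^sup>2)"
    by (rule eq_divide_imp[OF nz]) (simp add: eval_nat_numeral algebra_simps)
  also have "\<dots> = (case pqr TE7 of (p, q, r) \<Rightarrow>
       (1 - pow2 t p) * (1 - pow2 t q) * (1 - pow2 t r) / (1 - t\<^sup>2))" by (simp add: pow2_num)
  finally show ?thesis .
qed

lemma m_E8:
  assumes nz: "1 - t\<^sup>2 \<noteq> 0"
  shows "det (qcartan_aff TE8 t) = (case pqr TE8 of (p, q, r) \<Rightarrow>
       (1 - pow2 t p) * (1 - pow2 t q) * (1 - pow2 t r) / (1 - t\<^sup>2))"
proof -
  have u: "[0..<Suc (rank_of TE8)] = [0,1,2,3,4,5,6,7,8]" by (simp add: eval_nat_numeral)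
  have q: "qcartan_aff TE8 t = subm (Q TE8 t) [0..<Suc (rank_of TE8)]" by (rule qcartan_subm) simp
  have "det (qcartan_aff TE8 t) = det (subm (Q TE8 t) [0,1,2,3,4,5,6,7,8])" unfolding q u ..
  also have "\<dots> = 1 + t^2 - (t^2)^3 - (t^2)^4 - (t^2)^5 - (t^2)^6 + (t^2)^8 + (t^2)^9" by (rule det_E8)
  also have "\<dots> = (1 - t^10) * (1 - t^6) * (1 - t^4) / (1 - t\<^sup>2)"
    by (rule eq_divide_imp[OF nz]) (simp add: eval_nat_numeral algebra_simps)
  also have "\<dots> = (case pqr TE8 of (p, q, r) \<Rightarrow>
       (1 - pow2 t p) * (1 - pow2 t q) * (1 - pow2 t r) / (1 - t\<^sup>2))" by (simp add: pow2_num)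
  finally show ?thesis .
qed

lemma m_F4:
  assumes nz: "1 - t\<^sup>2 \<noteq> 0"
  shows "det (qcartan_aff TF4 t) = (case pqr TF4 of (p, q, r) \<Rightarrow>
       (1 - pow2 t p) * (1 - pow2 t q) * (1 - pow2 t r) / (1 - t\<^sup>2))"
proof -
  have u: "[0..<Suc (rank_of TF4)] = [0,1,2,3,4]" by (simp add: eval_nat_numeral)
  have q: "qcartan_aff TF4 t = subm (Q TF4 t) [0..<Suc (rank_of TF4)]" by (rule qcartan_subm) simp
  have "det (qcartan_aff TF4 t) = det (subm (Q TF4 t) [0,1,2,3,4])" unfolding q u ..
  also have "\<dots> = 1 - (t^2)^2 - (t^2)^3 + (t^2)^5" by (rule det_F4)
  also have "\<dots> = (1 - t^6) * (1 - t^4) * (1 - t^2) / (1 - t\<^sup>2)"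
    by (rule eq_divide_imp[OF nz]) (simp add: eval_nat_numeral algebra_simps)
  also have "\<dots> = (case pqr TF4 of (p, q, r) \<Rightarrow>
       (1 - pow2 t p) * (1 - pow2 t q) * (1 - pow2 t r) / (1 - t\<^sup>2))" by (simp add: pow2_num)
  finally show ?thesis .
qed

lemma m_G2:
  assumes nz: "1 - t\<^sup>2 \<noteq> 0"
  shows "det (qcartan_aff TG2 t) = (case pqr TG2 of (p, q, r) \<Rightarrow>
       (1 - pow2 t p) * (1 - pow2 t q) * (1 - pow2 t r) / (1 - t\<^sup>2))"
proof -
  have u: "[0..<Suc (rank_of TG2)] = [0,1,2]" by (simp add: eval_nat_numeral)
  have q: "qcartan_aff TG2 t = subm (Q TG2 t) [0..<Suc (rank_of TG2)]" by (rule qcartan_subm) simp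
  have "det (qcartan_aff TG2 t) = det (subm (Q TG2 t) [0,1,2])" unfolding q u ..
  also have "\<dots> = 1 - t^2 - (t^2)^2 + (t^2)^3" by (rule det_G2)
  also have "\<dots> = (1 - t^4) * (1 - t^2) * (1 - t^2) / (1 - t\<^sup>2)"
    by (rule eq_divide_imp[OF nz]) (simp add: eval_nat_numeral algebra_simps)
  also have "\<dots> = (case pqr TG2 of (p, q, r) \<Rightarrow>
       (1 - pow2 t p) * (1 - pow2 t q) * (1 - pow2 t r) / (1 - t\<^sup>2))" by (simp add: pow2_num)
  finally show ?thesis .
qed

lemma m_A0:
  assumes nz: "1 - t\<^sup>2 \<noteq> 0"
  shows "det (qcartan_aff (TA 0) t) = (case pqr (TA 0) of (p, q, r) \<Rightarrow>
       (1 - pow2 t p) * (1 - pow2 t q) * (1 - pow2 t r) / (1 - t\<^sup>2))"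
proof -
  have "det (qcartan_aff (TA 0) t) = (1-t)^2"
    unfolding qcartan_aff_def by (subst det_single) auto
  also have "\<dots> = (1 - t) * (1 - t) * (1 - t^2) / (1 - t\<^sup>2)"
    by (rule eq_divide_imp[OF nz]) (simp add: power2_eq_square)
  also have "\<dots> = (case pqr (TA 0) of (p, q, r) \<Rightarrow>
       (1 - pow2 t p) * (1 - pow2 t q) * (1 - pow2 t r) / (1 - t\<^sup>2))"
    using pow2_half[of t 1] by (simp add: pow2_num)
  finally show ?thesis .
qed

lemma m_A:
  assumes nz: "1 - t\<^sup>2 \<noteq> 0" and l: "1 \<le> l"
  shows "det (qcartan_aff (TA l) t) = (case pqr (TA l) of (p, q, r) \<Rightarrow>
       (1 - pow2 t p) * (1 - pow2 t q) * (1 - pow2 t r) / (1 - t\<^sup>2))"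
proof -
  have q: "qcartan_aff (TA l) t = subm (Q (TA l) t) [0..<Suc l]" using qcartan_subm[of "TA l" t] l by simp
  have c: "cycB (Suc l) t \<in> carrier_mat (Suc l) (Suc l)" by (simp add: cycB_def)
  have d1: "det (cycB (Suc l) t * (cycB (Suc l) t)\<^sup>T) = det (cycB (Suc l) t) * det ((cycB (Suc l) t)\<^sup>T)"
    by (rule det_mult[OF c]) (simp add: cycB_def)
  have d2: "det ((cycB (Suc l) t)\<^sup>T) = det (cycB (Suc l) t)"
    by (rule det_transpose[OF c])
  have d3: "det (cycB (Suc l) t) = 1 - t^Suc l" by (rule det_cycB[OF l])
  have p: "pow2 t (of_nat (l + 1) / 2) = t^Suc l" using pow2_half[of t "l+1"] by simp
  have "det (qcartan_aff (TA l) t) = (1 - t^Suc l) * (1 - t^Suc l)"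
    unfolding q cyc_fact[OF l] d1 d2 d3 ..
  also have "\<dots> = (1 - t^Suc l) * (1 - t^Suc l) * (1 - t^2) / (1 - t\<^sup>2)"
    by (rule eq_divide_imp[OF nz]) (rule refl)
  also have "\<dots> = (1 - pow2 t (of_nat (l + 1) / 2)) * (1 - pow2 t (of_nat (l + 1) / 2)) * (1 - pow2 t 1) / (1 - t\<^sup>2)"
    unfolding p pow2_num ..
  also have "\<dots> = (case pqr (TA l) of (p, q, r) \<Rightarrow>
       (1 - pow2 t p) * (1 - pow2 t q) * (1 - pow2 t r) / (1 - t\<^sup>2))"
    by (simp only: pqr.simps prod.case)
  finally show ?thesis .
qed

lemma m_D:
  assumes nz: "1 - t\<^sup>2 \<noteq> 0" and l: "4 \<le> l"
  shows "det (qcartan_aff (TD l) t) = (case pqr (TD l) of (p, q, r) \<Rightarrow>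
       (1 - pow2 t p) * (1 - pow2 t q) * (1 - pow2 t r) / (1 - t\<^sup>2))"
proof -
  have q: "qcartan_aff (TD l) t = subm (Q (TD l) t) [0..<Suc l]" using qcartan_subm[of "TD l" t] by simp
  have ofn: "(of_nat l - 2 :: rat) = of_nat (l - 2)" using l by (simp add: of_nat_diff)
  have p: "pow2 t (of_nat l - 2) = t^(2*(l-2))" unfolding ofn by (rule pow2_nat)
  have pm: "(t^2)^(l-2) = t^(2*(l-2))" by (simp only: power_mult)
  have poly: "\<And>u. (1 - u) * (1 - (t^2)^2) * (1 + t^2) * (1 - t^2) = (1 - u) * (1 - t^4) * (1 - t^4)"
    by (simp add: eval_nat_numeral algebra_simps)
  have "det (qcartan_aff (TD l) t) = (1 - (t^2)^(l-2)) * (1 - (t^2)^2) * (1 + t^2)"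
    unfolding q by (rule TD_det[OF l])
  also have "\<dots> = (1 - t^(2*(l-2))) * (1 - t^4) * (1 - t^4) / (1 - t\<^sup>2)"
    by (rule eq_divide_imp[OF nz]) (unfold pm, rule poly)
  also have "\<dots> = (case pqr (TD l) of (p, q, r) \<Rightarrow>
       (1 - pow2 t p) * (1 - pow2 t q) * (1 - pow2 t r) / (1 - t\<^sup>2))"
    using p by (simp add: pow2_num)
  finally show ?thesis .
qed

lemma m_C:
  assumes nz: "1 - t\<^sup>2 \<noteq> 0" and l: "2 \<le> l"
  shows "det (qcartan_aff (TC l) t) = (case pqr (TC l) of (p, q, r) \<Rightarrow>
       (1 - pow2 t p) * (1 - pow2 t q) * (1 - pow2 t r) / (1 - t\<^sup>2))"
proof -
  have q: "qcartan_aff (TC l) t = subm (Q (TC l) t) [0..<Suc l]" using qcartan_subm[of "TC l" t] by simp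
  have pm: "(t^2)^l = t^(2*l)" by (simp only: power_mult)
  have poly: "\<And>u. (1 - t^2) * (1 - u) * (1 - t^2) = (1 - u) * (1 - t^2) * (1 - (t::real)^2)"
    by (simp add: algebra_simps)
  have "det (qcartan_aff (TC l) t) = (1 - t^2) * (1 - (t^2)^l)"
    unfolding q by (rule TC_det[OF l])
  also have "\<dots> = (1 - t^(2*l)) * (1 - t^2) * (1 - t^2) / (1 - t\<^sup>2)"
    by (rule eq_divide_imp[OF nz]) (unfold pm, rule poly)
  also have "\<dots> = (case pqr (TC l) of (p, q, r) \<Rightarrow>
       (1 - pow2 t p) * (1 - pow2 t q) * (1 - pow2 t r) / (1 - t\<^sup>2))"
    by (simp add: pow2_num pow2_nat)
  finally show ?thesis .
qed

lemma m_B: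
  assumes nz: "1 - t\<^sup>2 \<noteq> 0" and l: "3 \<le> l"
  shows "det (qcartan_aff (TB l) t) = (case pqr (TB l) of (p, q, r) \<Rightarrow>
       (1 - pow2 t p) * (1 - pow2 t q) * (1 - pow2 t r) / (1 - t\<^sup>2))"
proof -
  have q: "qcartan_aff (TB l) t = subm (Q (TB l) t) [0..<Suc l]" using qcartan_subm[of "TB l" t] by simp
  have ofn: "(of_nat l - 1 :: rat) = of_nat (l - 1)" using l by (simp add: of_nat_diff)
  have p: "pow2 t (of_nat l - 1) = t^(2*(l-1))" unfolding ofn by (rule pow2_nat)
  have pm: "(t^2)^(l-1) = t^(2*(l-1))" by (simp only: power_mult)
  have poly: "\<And>u. (1 - u) * (1 - (t^2)^2) * (1 - t^2) = (1 - u) * (1 - t^4) * (1 - (t::real)^2)"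
    by (simp add: eval_nat_numeral algebra_simps)
  have "det (qcartan_aff (TB l) t) = (1 - (t^2)^(l-1)) * (1 - (t^2)^2)"
    unfolding q by (rule TB_det[OF l])
  also have "\<dots> = (1 - t^(2*(l-1))) * (1 - t^4) * (1 - t^2) / (1 - t\<^sup>2)"
    by (rule eq_divide_imp[OF nz]) (unfold pm, rule poly)
  also have "\<dots> = (case pqr (TB l) of (p, q, r) \<Rightarrow>
       (1 - pow2 t p) * (1 - pow2 t q) * (1 - pow2 t r) / (1 - t\<^sup>2))"
    using p by (simp add: pow2_num)
  finally show ?thesis .
qed

theorem mainTheorem3:
  fixes X :: cartan_type and t :: real
  assumes "valid_type X" and "1 - t\<^sup>2 \<noteq> 0"
  shows "det (qcartan_aff X t) =
    (case pqr X of (p, q, r) \<Rightarrow>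
       (1 - pow2 t p) * (1 - pow2 t q) * (1 - pow2 t r) / (1 - t\<^sup>2))"
proof (cases X)
  case (TA l)
  show ?thesis
  proof (cases "l = 0")
    case True
    then show ?thesis using m_A0[OF assms(2)] TA by simp
  next
    case False
    then show ?thesis using m_A[OF assms(2), of l] TA by simp
  qed
next
  case (TD l)
  then show ?thesis using m_D[OF assms(2), of l] assms(1) by simp
next
  case TE6
  then show ?thesis using m_E6[OF assms(2)] by simp
next
  case TE7
  then show ?thesis using m_E7[OF assms(2)] by simp
next
  case TE8
  then show ?thesis using m_E8[OF assms(2)] by simp
next
  case (TC l)
  then show ?thesis using m_C[OF assms(2), of l] assms(1) by simp
next
  case (TB l)
  then show ?thesis using m_B[OF assms(2), of l] assms(1) by simp
next
  case TF4
  then show ?thesis using m_F4[OF assms(2)] by simp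
next
  case TG2
  then show ?thesis using m_G2[OF assms(2)] by simp
qed

end
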